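(* Let $Y\in\mathcal{H}^{n\times r}$ be a right canonical matrix for $T$ at $\lambda_0$, and let $V\in\mathcal{H}^{r\times n}$ be such that $T^{-1}-Y\Delta^{-1}V$ has a pole of order $j\ge1$ at $\lambda_0$. Then there exists $\tilde V\in\mathcal{H}^{r\times n}$ such that $T^{-1}-Y\Delta^{-1}\tilde V$ has pole order at most $j-1$ at $\lambda_0$.
   Context: Let $\Omega\subset\mathbb{C}$ be open and $\lambda_0\in\Omega$ fixed. $\mathcal{H}$ denotes the ring of holomorphic functions on $\Omega$, and $\mathcal{H}_0$ the ring of functions holomorphic in some neighborhood of $\lambda_0$. Write $\chi_0(\lambda)=\lambda-\lambda_0$. Throughout, $T\in\mathcal{H}^{n\times n}$ with $\det T$ not identically zero and $\det T(\lambda_0)=0$, and $r=\dim\ker T(\lambda_0)$. There exist $U_L,U_R\in\mathcal{H}_0^{n\times n}$ with $U_L(\lambda_0),U_R(\lambda_0)$ nonsingular and uniquely determined integers $m_1\ge\cdots\ge m_n\ge 0$ (the partial multiplicities) with $U_LTU_R=\mathrm{diag}(\chi_0^{m_1},\dots,\chi_0^{m_n})$; $m_i>0$ exactly for $i\le r$. Set $\Delta=\mathrm{diag}(\chi_0^{m_1},\dots,\chi_0^{m_r})$. Pole order $0$ means holomorphic near $\lambda_0$. A root function for $T$ at $\lambda_0$ is $y\in\mathcal{H}^n$ with $y(\lambda_0)\neq0$ and $T(\lambda_0)y(\lambda_0)=0$; its multiplicity $\nu(y)$ is the order of the zero of $Ty$ at $\lambda_0$. A right canonical matrix for $T$ at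 $\lambda_0$ is $Y\in\mathcal{H}^{n\times r}$ whose columns $y_1,\dots,y_r$ are root functions such that (a) $y_1(\lambda_0),\dots,y_r(\lambda_0)$ are linearly independent, (b) $\sum_{i=1}^r\nu(y_i)=\sum_{i=1}^r m_i$, (c) $\nu(y_1)\ge\cdots\ge\nu(y_r)$. *)

theory Defs
  imports "HOL-Complex_Analysis.Complex_Analysis" "Jordan_Normal_Form.Matrix_Kernel"
begin

definition hol_mat :: "complex set \<Rightarrow> nat \<Rightarrow> nat \<Rightarrow> (complex \<Rightarrow> complex mat) \<Rightarrow> bool" where
  "hol_mat S p q A \<longleftrightarrow> (\<forall>z. A z \<in> carrier_mat p q) \<and>
     (\<forall>i<p. \<forall>j<q. (\<lambda>z. A z $$ (i,j)) holomorphic_on S)"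

definition hol_vec :: "complex set \<Rightarrow> nat \<Rightarrow> (complex \<Rightarrow> complex vec) \<Rightarrow> bool" where
  "hol_vec S p y \<longleftrightarrow> (\<forall>z. y z \<in> carrier_vec p) \<and>
     (\<forall>i<p. (\<lambda>z. vec_index (y z) i) holomorphic_on S)"

definition hol_mat_near :: "complex \<Rightarrow> nat \<Rightarrow> nat \<Rightarrow> (complex \<Rightarrow> complex mat) \<Rightarrow> bool" where
  "hol_mat_near z0 p q A \<longleftrightarrow> (\<exists>e>0. hol_mat (ball z0 e) p q A)"

definition partial_multiplicities ::
    "(complex \<Rightarrow> complex mat) \<Rightarrow> complex \<Rightarrow> nat \<Rightarrow> (nat \<Rightarrow> nat) \<Rightarrow> bool" where
  "partial_multiplicities T z0 n m \<longleftrightarrow>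
     (\<forall>i j. i \<le> j \<longrightarrow> j < n \<longrightarrow> m j \<le> m i) \<and>
     (\<exists>e>0. \<exists>UL UR. hol_mat (ball z0 e) n n UL \<and> hol_mat (ball z0 e) n n UR \<and>
        det (UL z0) \<noteq> 0 \<and> det (UR z0) \<noteq> 0 \<and>
        (\<forall>z\<in>ball z0 e. UL z * T z * UR z = mat_diag n (\<lambda>i. (z - z0) ^ m i)))"

definition Delta_inv :: "complex \<Rightarrow> nat \<Rightarrow> (nat \<Rightarrow> nat) \<Rightarrow> complex \<Rightarrow> complex mat" where
  "Delta_inv z0 r m z = mat_diag r (\<lambda>i. 1 / (z - z0) ^ m i)"

definition root_function ::
    "complex set \<Rightarrow> (complex \<Rightarrow> complex mat) \<Rightarrow> complex \<Rightarrow> nat \<Rightarrow> (complex \<Rightarrow> complex vec) \<Rightarrow> bool" where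
  "root_function \<Omega> T z0 n y \<longleftrightarrow> hol_vec \<Omega> n y \<and> y z0 \<noteq> 0\<^sub>v n \<and> T z0 *\<^sub>v y z0 = 0\<^sub>v n"

definition vec_zero_order :: "nat \<Rightarrow> complex \<Rightarrow> (complex \<Rightarrow> complex vec) \<Rightarrow> nat \<Rightarrow> bool" where
  "vec_zero_order n z0 g k \<longleftrightarrow>
     (\<exists>e>0. \<exists>h. hol_vec (ball z0 e) n h \<and> h z0 \<noteq> 0\<^sub>v n \<and>
        (\<forall>z\<in>ball z0 e. g z = (z - z0) ^ k \<cdot>\<^sub>v h z))"

definition root_mult :: "(complex \<Rightarrow> complex mat) \<Rightarrow> complex \<Rightarrow> nat \<Rightarrow> (complex \<Rightarrow> complex vec) \<Rightarrow> nat" where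
  "root_mult T z0 n y = (THE k. vec_zero_order n z0 (\<lambda>z. T z *\<^sub>v y z) k)"

definition right_canonical ::
    "complex set \<Rightarrow> (complex \<Rightarrow> complex mat) \<Rightarrow> complex \<Rightarrow> nat \<Rightarrow> (nat \<Rightarrow> nat)
       \<Rightarrow> (complex \<Rightarrow> complex mat) \<Rightarrow> bool" where
  "right_canonical \<Omega> T z0 n m Y \<longleftrightarrow>
     (let r = kernel_dim (T z0); nu = (\<lambda>i. root_mult T z0 n (\<lambda>z. col (Y z) i)) in
      hol_mat \<Omega> n r Y \<and>
      (\<forall>i<r. root_function \<Omega> T z0 n (\<lambda>z. col (Y z) i)) \<and>
      (\<forall>c\<in>carrier_vec r. Y z0 *\<^sub>v c = 0\<^sub>v n \<longrightarrow> c = 0\<^sub>v r) \<and>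
      (\<Sum>i<r. nu i) = (\<Sum>i<r. m i) \<and>
      (\<forall>i j. i \<le> j \<longrightarrow> j < r \<longrightarrow> nu j \<le> nu i))"

definition pole_order_le :: "nat \<Rightarrow> complex \<Rightarrow> (complex \<Rightarrow> complex mat) \<Rightarrow> nat \<Rightarrow> bool" where
  "pole_order_le n z0 F k \<longleftrightarrow>
     (\<exists>e>0. \<exists>G. hol_mat (ball z0 e) n n G \<and>
        (\<forall>z\<in>ball z0 e - {z0}. (z - z0) ^ k \<cdot>\<^sub>m F z = G z))"

definition pole_order_eq :: "nat \<Rightarrow> complex \<Rightarrow> (complex \<Rightarrow> complex mat) \<Rightarrow> nat \<Rightarrow> bool" where
  "pole_order_eq n z0 F k \<longleftrightarrow> pole_order_le n z0 F k \<and> (k > 0 \<longrightarrow> \<not> pole_order_le n z0 F (k - 1))"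

definition resid_fun :: "(complex \<Rightarrow> complex mat) \<Rightarrow> complex \<Rightarrow> nat \<Rightarrow> (nat \<Rightarrow> nat)
    \<Rightarrow> (complex \<Rightarrow> complex mat) \<Rightarrow> (complex \<Rightarrow> complex mat) \<Rightarrow> complex \<Rightarrow> complex mat" where
  "resid_fun T z0 r m Y V z = the (mat_inverse (T z)) - Y z * Delta_inv z0 r m z * V z"

end

theory Submission
  imports Defs
begin


lemma hol_matD:
  "hol_mat S p q A \<Longrightarrow> A z \<in> carrier_mat p q"
  "hol_mat S p q A \<Longrightarrow> i < p \<Longrightarrow> j < q \<Longrightarrow> (\<lambda>z. A z $$ (i,j)) holomorphic_on S"
  unfolding hol_mat_def by auto

lemma hol_matI:
  "(\<And>z. A z \<in> carrier_mat p q) \<Longrightarrow> (\<And>i j. i < p \<Longrightarrow> j < q \<Longrightarrow> (\<lambda>z. A z $$ (i,j)) holomorphic_on S) \<Longrightarrow> hol_mat S p q A"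
  unfolding hol_mat_def by auto

lemma hol_mat_subset: "hol_mat S p q A \<Longrightarrow> T \<subseteq> S \<Longrightarrow> hol_mat T p q A"
  unfolding hol_mat_def using holomorphic_on_subset by blast

lemma hol_mat_mat:
  assumes "\<And>i j. i < p \<Longrightarrow> j < q \<Longrightarrow> (\<lambda>z. f z i j) holomorphic_on S"
  shows "hol_mat S p q (\<lambda>z. mat p q (\<lambda>(i,j). f z i j))"
  using assms by (intro hol_matI) auto

lemma hol_mat_const: "C \<in> carrier_mat p q \<Longrightarrow> hol_mat S p q (\<lambda>z. C)"
  by (intro hol_matI) auto

lemma hol_mat_mult:
  assumes A: "hol_mat S p q A" and B: "hol_mat S q t B"
  shows "hol_mat S p t (\<lambda>z. A z * B z)"
proof (rule hol_matI)
  fix z show "A z * B z \<in> carrier_mat p t" by (rule mult_carrier_mat[OF hol_matD(1)[OF A] hol_matD(1)[OF B]])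
next
  fix i j assume ij: "i < p" "j < t"
  have eq: "(A z * B z) $$ (i,j) = (\<Sum>k = 0..<q. A z $$ (i,k) * B z $$ (k,j))" for z
    using hol_matD(1)[OF A, of z] hol_matD(1)[OF B, of z] ij
    by (auto simp: scalar_prod_def intro!: sum.cong)
  show "(\<lambda>z. (A z * B z) $$ (i,j)) holomorphic_on S"
    unfolding eq
    by (intro holomorphic_on_sum holomorphic_on_mult hol_matD(2)[OF A] hol_matD(2)[OF B]) (use ij in auto)
qed

lemma hol_mat_add:
  assumes A: "hol_mat S p q A" and B: "hol_mat S p q B"
  shows "hol_mat S p q (\<lambda>z. A z + B z)"
proof (rule hol_matI)
  fix z show "A z + B z \<in> carrier_mat p q" using hol_matD(1)[OF A] hol_matD(1)[OF B] by auto
next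
  fix i j assume ij: "i < p" "j < q"
  have eq: "(A z + B z) $$ (i,j) = A z $$ (i,j) + B z $$ (i,j)" for z
    using hol_matD(1)[OF A, of z] hol_matD(1)[OF B, of z] ij by auto
  show "(\<lambda>z. (A z + B z) $$ (i,j)) holomorphic_on S"
    unfolding eq by (intro holomorphic_on_add hol_matD(2)[OF A] hol_matD(2)[OF B] ij)
qed

lemma hol_mat_minus:
  assumes A: "hol_mat S p q A" and B: "hol_mat S p q B"
  shows "hol_mat S p q (\<lambda>z. A z - B z)"
proof (rule hol_matI)
  fix z show "A z - B z \<in> carrier_mat p q" by (rule minus_carrier_mat[OF hol_matD(1)[OF B]])
next
  fix i j assume ij: "i < p" "j < q"
  have eq: "(A z - B z) $$ (i,j) = A z $$ (i,j) - B z $$ (i,j)" for z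
    using hol_matD(1)[OF A, of z] hol_matD(1)[OF B, of z] ij by auto
  show "(\<lambda>z. (A z - B z) $$ (i,j)) holomorphic_on S"
    unfolding eq by (intro holomorphic_on_diff hol_matD(2)[OF A] hol_matD(2)[OF B] ij)
qed

lemma hol_mat_smult:
  assumes A: "hol_mat S p q A" and f: "f holomorphic_on S"
  shows "hol_mat S p q (\<lambda>z. f z \<cdot>\<^sub>m A z)"
proof (rule hol_matI)
  fix z show "f z \<cdot>\<^sub>m A z \<in> carrier_mat p q" using hol_matD(1)[OF A] by auto
next
  fix i j assume ij: "i < p" "j < q"
  have eq: "(f z \<cdot>\<^sub>m A z) $$ (i,j) = f z * A z $$ (i,j)" for z
    using hol_matD(1)[OF A, of z] ij by auto
  show "(\<lambda>z. (f z \<cdot>\<^sub>m A z) $$ (i,j)) holomorphic_on S"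
    unfolding eq by (intro holomorphic_on_mult f hol_matD(2)[OF A] ij)
qed

lemma hol_det:
  assumes A: "hol_mat S n n A"
  shows "(\<lambda>z. det (A z)) holomorphic_on S"
proof -
  have eq: "det (A z) = (\<Sum>p | p permutes {0..<n}. of_int (sign p) * (\<Prod>i = 0..<n. A z $$ (i, p i)))" for z
    using hol_matD(1)[OF A, of z] by (simp add: det_def)
  show ?thesis unfolding eq
  proof (intro holomorphic_on_sum holomorphic_on_mult holomorphic_on_const holomorphic_on_prod)
    fix p i assume "p \<in> {p. p permutes {0..<n}}" "i \<in> {0..<n}"
    then have "p i < n" by (auto simp: permutes_in_image)
    then show "(\<lambda>z. A z $$ (i, p i)) holomorphic_on S" using \<open>i \<in> _\<close> by (intro hol_matD(2)[OF A]) auto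
  qed
qed

lemma hol_mat_delete:
  assumes A: "hol_mat S n n A" and "i < n" "j < n"
  shows "hol_mat S (n-1) (n-1) (\<lambda>z. mat_delete (A z) i j)"
proof (rule hol_matI)
  fix z show "mat_delete (A z) i j \<in> carrier_mat (n-1) (n-1)" using hol_matD(1)[OF A, of z]
    by (auto simp: mat_delete_def)
next
  fix a b assume ab: "a < n - 1" "b < n - 1"
  have eq: "mat_delete (A z) i j $$ (a,b) = A z $$ (if a < i then a else Suc a, if b < j then b else Suc b)" for z
    using hol_matD(1)[OF A, of z] ab by (auto simp: mat_delete_def)
  show "(\<lambda>z. mat_delete (A z) i j $$ (a,b)) holomorphic_on S"
    unfolding eq by (rule hol_matD(2)[OF A]) (use ab in auto)
qed

lemma hol_adj:
  assumes A: "hol_mat S n n A"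
  shows "hol_mat S n n (\<lambda>z. adj_mat (A z))"
proof (rule hol_matI)
  fix z show "adj_mat (A z) \<in> carrier_mat n n" using adj_mat(1)[OF hol_matD(1)[OF A]] by auto
next
  fix i j assume ij: "i < n" "j < n"
  have eq: "adj_mat (A z) $$ (i,j) = (- 1) ^ (j + i) * det (mat_delete (A z) j i)" for z
    using hol_matD(1)[OF A, of z] ij by (auto simp: adj_mat_def cofactor_def)
  show "(\<lambda>z. adj_mat (A z) $$ (i,j)) holomorphic_on S"
    unfolding eq by (intro holomorphic_on_mult holomorphic_on_const hol_det[of S "n-1"] hol_mat_delete[OF A] ij)
qed

lemma smult_smult_mat': "a \<cdot>\<^sub>m (b \<cdot>\<^sub>m A) = (a * b :: 'a :: comm_ring_1) \<cdot>\<^sub>m A"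
  by (rule eq_matI) auto

lemma one_smult_mat': "(1 :: 'a :: comm_ring_1) \<cdot>\<^sub>m A = A"
  by (rule eq_matI) auto

lemma hol_inv:
  assumes A: "hol_mat S n n A" and nz: "\<And>z. z \<in> S \<Longrightarrow> det (A z) \<noteq> 0"
  shows "hol_mat S n n (\<lambda>z. (1 / det (A z)) \<cdot>\<^sub>m adj_mat (A z))"
    "\<And>z. z \<in> S \<Longrightarrow> A z * ((1 / det (A z)) \<cdot>\<^sub>m adj_mat (A z)) = 1\<^sub>m n"
    "\<And>z. z \<in> S \<Longrightarrow> ((1 / det (A z)) \<cdot>\<^sub>m adj_mat (A z)) * A z = 1\<^sub>m n"
proof -
  show "hol_mat S n n (\<lambda>z. (1 / det (A z)) \<cdot>\<^sub>m adj_mat (A z))"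
    by (intro hol_mat_smult hol_adj A holomorphic_on_divide holomorphic_on_const hol_det[OF A] nz)
  fix z assume z: "z \<in> S"
  note c = hol_matD(1)[OF A, of z]
  show "A z * ((1 / det (A z)) \<cdot>\<^sub>m adj_mat (A z)) = 1\<^sub>m n"
    using c nz[OF z] adj_mat[OF c] by (simp add: mult_smult_distrib[OF c adj_mat(1)[OF c]] smult_smult_mat' one_smult_mat')
  show "((1 / det (A z)) \<cdot>\<^sub>m adj_mat (A z)) * A z = 1\<^sub>m n"
    using c nz[OF z] adj_mat[OF c] by (simp add: mult_smult_assoc_mat[OF adj_mat(1)[OF c] c] smult_smult_mat' one_smult_mat')
qed

lemma center_eq:
  fixes f g :: "complex \<Rightarrow> complex"
  assumes "open S" "z0 \<in> S" "continuous_on S f" "continuous_on S g"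
    and "\<And>z. z \<in> S \<Longrightarrow> z \<noteq> z0 \<Longrightarrow> f z = g z"
  shows "f z0 = g z0"
proof -
  have f: "(f \<longlongrightarrow> f z0) (at z0)" using assms continuous_on_eq_continuous_at isContD by blast
  have g: "(g \<longlongrightarrow> g z0) (at z0)" using assms continuous_on_eq_continuous_at isContD by blast
  have "eventually (\<lambda>z. g z = f z) (at z0)"
    using assms(1,2,5) by (auto simp: eventually_at_topological)
  with g have "(f \<longlongrightarrow> g z0) (at z0)" by (rule Lim_transform_eventually)
  from tendsto_unique[OF at_neq_bot f this] show ?thesis .
qed




lemma scalar_order:
  fixes f :: "complex \<Rightarrow> complex"
  assumes hol: "f holomorphic_on ball z0 e" and e: "e > 0" and nz: "\<exists>z\<in>ball z0 e. f z \<noteq> 0"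
  shows "\<exists>k r g. 0 < r \<and> ball z0 r \<subseteq> ball z0 e \<and> g holomorphic_on ball z0 r \<and> g z0 \<noteq> 0 \<and>
     (\<forall>w\<in>ball z0 r. f w = (w - z0)^k * g w)"
proof (cases "f z0 = 0")
  case False
  then show ?thesis using hol e by (intro exI[of _ 0] exI[of _ e] exI[of _ f]) auto
next
  case True
  have nc: "\<not> f constant_on ball z0 e"
  proof
    assume "f constant_on ball z0 e"
    then obtain c where "\<And>z. z \<in> ball z0 e \<Longrightarrow> f z = c" by (auto simp: constant_on_def)
    moreover have "z0 \<in> ball z0 e" using e by auto
    ultimately show False using nz True by metis
  qed
  obtain g r k where "0 < k" "0 < r" "ball z0 r \<subseteq> ball z0 e" "g holomorphic_on ball z0 r"
    "\<And>w. w \<in> ball z0 r \<Longrightarrow> f w = (w - z0)^k * g w" "\<And>w. w \<in> ball z0 r \<Longrightarrow> g w \<noteq> 0"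
    by (rule holomorphic_factor_zero_nonconstant[OF hol open_ball connected_ball _ True nc]) (use e in auto)
  then show ?thesis by (intro exI[of _ k] exI[of _ r] exI[of _ g]) auto
qed

lemma hol_vecD:
  "hol_vec S p y \<Longrightarrow> y z \<in> carrier_vec p"
  "hol_vec S p y \<Longrightarrow> i < p \<Longrightarrow> (\<lambda>z. y z $ i) holomorphic_on S"
  unfolding hol_vec_def by auto

lemma vzo_unique:
  assumes "vec_zero_order n z0 g k" "vec_zero_order n z0 g k'"
  shows "k = k'"
proof -
  have main: False if H1: "vec_zero_order n z0 g k" and H2: "vec_zero_order n z0 g k'" and H3: "k < k'" for k k'
  proof -
    obtain e h where e: "e > 0" "hol_vec (ball z0 e) n h" "h z0 \<noteq> 0\<^sub>v n"
      "\<And>z. z \<in> ball z0 e \<Longrightarrow> g z = (z - z0) ^ k \<cdot>\<^sub>v h z"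
      using H1 unfolding vec_zero_order_def by blast
    obtain e' h' where e': "e' > 0" "hol_vec (ball z0 e') n h'"
      "\<And>z. z \<in> ball z0 e' \<Longrightarrow> g z = (z - z0) ^ k' \<cdot>\<^sub>v h' z"
      using H2 unfolding vec_zero_order_def by blast
    have hc: "h z0 \<in> carrier_vec n" using hol_vecD(1)[OF e(2)] .
    then obtain i where i: "i < n" "h z0 $ i \<noteq> 0" using e(3) by (metis eq_vecI carrier_vecD index_zero_vec)
    define d where "d = min e e'"
    have d: "d > 0" "ball z0 d \<subseteq> ball z0 e" "ball z0 d \<subseteq> ball z0 e'" using e e' by (auto simp: d_def)
    have "h z0 $ i = (z0 - z0) ^ (k' - k) * h' z0 $ i"
    proof (rule center_eq[of "ball z0 d", where f = "\<lambda>z. h z $ i" and g = "\<lambda>z. (z - z0) ^ (k' - k) * h' z $ i"])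
      show "continuous_on (ball z0 d) (\<lambda>z. h z $ i)"
        using hol_vecD(2)[OF e(2) i(1)] d holomorphic_on_imp_continuous_on holomorphic_on_subset by blast
      show "continuous_on (ball z0 d) (\<lambda>z. (z - z0) ^ (k' - k) * h' z $ i)"
        using hol_vecD(2)[OF e'(2) i(1)] d
        by (intro continuous_intros) (meson holomorphic_on_imp_continuous_on holomorphic_on_subset)
      fix z assume z: "z \<in> ball z0 d" "z \<noteq> z0"
      have "(z - z0) ^ k * h z $ i = (z - z0) ^ k' * h' z $ i"
        using e(4)[of z] e'(3)[of z] z d hol_vecD(1)[OF e(2), of z] hol_vecD(1)[OF e'(2), of z] i
        by (metis (no_types, lifting) carrier_vecD index_smult_vec(1) subsetD)
      also have "(z - z0) ^ k' = (z - z0) ^ k * (z - z0) ^ (k' - k)"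
        using H3 by (simp add: power_add[symmetric])
      finally show "h z $ i = (z - z0) ^ (k' - k) * h' z $ i" using z by simp
    qed (use d in auto)
    then show False using i H3 by simp
  qed
  show ?thesis using main[OF assms] main[OF assms(2,1)] by (cases "k < k'") (auto simp: not_less_iff_gr_or_eq)
qed

lemma vzo_exists:
  assumes hol: "hol_vec (ball z0 e) n g" and e: "e > 0" and z1: "z1 \<in> ball z0 e" "g z1 \<noteq> 0\<^sub>v n"
  shows "\<exists>k. vec_zero_order n z0 g k"
proof -
  define NZ where "NZ = {i. i < n \<and> (\<exists>z\<in>ball z0 e. g z $ i \<noteq> 0)}"
  have "g z1 \<in> carrier_vec n" using hol_vecD(1)[OF hol] .
  then obtain i0 where "i0 < n" "g z1 $ i0 \<noteq> 0" using z1(2) by (metis eq_vecI carrier_vecD index_zero_vec)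
  then have i0: "i0 \<in> NZ" using z1 by (auto simp: NZ_def)
  have finNZ: "finite NZ" by (auto simp: NZ_def)
  have "\<forall>i\<in>NZ. \<exists>k r gg. 0 < r \<and> ball z0 r \<subseteq> ball z0 e \<and> gg holomorphic_on ball z0 r \<and> gg z0 \<noteq> 0 \<and>
     (\<forall>w\<in>ball z0 r. g w $ i = (w - z0)^k * gg w)"
    using scalar_order[OF hol_vecD(2)[OF hol] e] by (auto simp: NZ_def)
  then obtain K R G where KRG: "\<And>i. i \<in> NZ \<Longrightarrow> 0 < R i \<and> ball z0 (R i) \<subseteq> ball z0 e \<and> G i holomorphic_on ball z0 (R i) \<and> G i z0 \<noteq> 0 \<and>
     (\<forall>w\<in>ball z0 (R i). g w $ i = (w - z0)^(K i) * G i w)"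
    by metis
  define k where "k = Min (K ` NZ)"
  define r where "r = Min (R ` NZ)"
  have r: "r > 0" "\<And>i. i \<in> NZ \<Longrightarrow> r \<le> R i" using finNZ i0 KRG unfolding r_def by (subst Min_gr_iff) (auto intro!: Min_le finite_imageI[OF finNZ])
  have k: "\<And>i. i \<in> NZ \<Longrightarrow> k \<le> K i" "k \<in> K ` NZ" using finNZ i0 unfolding k_def by (auto intro!: Min_in)
  then obtain i1 where i1: "i1 \<in> NZ" "K i1 = k" by auto
  have re: "ball z0 r \<subseteq> ball z0 e" using KRG[OF i0] r(2)[OF i0] by auto
  define h where "h = (\<lambda>z. vec n (\<lambda>i. if i \<in> NZ then (z - z0) ^ (K i - k) * G i z else 0))"
  show ?thesis unfolding vec_zero_order_def
  proof (intro exI[of _ k] exI[of _ r] exI[of _ h] conjI ballI)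
    show "0 < r" by fact
    show "hol_vec (ball z0 r) n h" unfolding hol_vec_def
    proof (intro conjI allI impI)
      fix i assume "i < n"
      show "(\<lambda>z. h z $ i) holomorphic_on ball z0 r"
      proof (cases "i \<in> NZ")
        case True
        have "G i holomorphic_on ball z0 r" using KRG[OF True] r(2)[OF True]
          by (meson holomorphic_on_subset subset_ball)
        then show ?thesis using True \<open>i < n\<close> by (auto simp: h_def intro!: holomorphic_intros)
      qed (use \<open>i < n\<close> in \<open>auto simp: h_def\<close>)
    qed (auto simp: h_def)
    show "h z0 \<noteq> 0\<^sub>v n"
    proof
      assume "h z0 = 0\<^sub>v n"
      then have "h z0 $ i1 = 0" using i1 by (auto simp: NZ_def)
      then show False using i1 KRG[OF i1(1)] by (auto simp: h_def NZ_def)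
    qed
    fix z assume z: "z \<in> ball z0 r"
    show "g z = (z - z0) ^ k \<cdot>\<^sub>v h z"
    proof (rule eq_vecI)
      show "dim_vec (g z) = dim_vec ((z - z0) ^ k \<cdot>\<^sub>v h z)"
        using hol_vecD(1)[OF hol, of z] by (auto simp: h_def)
      fix i assume "i < dim_vec ((z - z0) ^ k \<cdot>\<^sub>v h z)"
      then have i: "i < n" by (auto simp: h_def)
      show "g z $ i = ((z - z0) ^ k \<cdot>\<^sub>v h z) $ i"
      proof (cases "i \<in> NZ")
        case True
        have zR: "z \<in> ball z0 (R i)" using z r(2)[OF True] by auto
        have "g z $ i = (z - z0)^(K i) * G i z" using KRG[OF True] zR by auto
        also have "(z - z0)^(K i) = (z - z0)^k * (z - z0)^(K i - k)" using k(1)[OF True]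
          by (simp add: power_add[symmetric])
        finally show ?thesis using True i by (simp add: h_def)
      next
        case False
        then have "g z $ i = 0" using i z re by (auto simp: NZ_def)
        then show ?thesis using False i by (simp add: h_def)
      qed
    qed
  qed
qed

lemma root_mult_spec:
  assumes hol: "hol_vec (ball z0 e) n g" and e: "e > 0" and z1: "z1 \<in> ball z0 e" "g z1 \<noteq> 0\<^sub>v n"
    and gT: "g = (\<lambda>z. T z *\<^sub>v y z)"
  shows "vec_zero_order n z0 (\<lambda>z. T z *\<^sub>v y z) (root_mult T z0 n y)"
proof -
  obtain k where k: "vec_zero_order n z0 g k" using vzo_exists[OF hol e z1] by blast
  have "root_mult T z0 n y = k" unfolding root_mult_def gT[symmetric]
    using k vzo_unique by blast
  then show ?thesis using k gT by simp
qed




lemma inv_exists: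
  fixes A :: "complex mat"
  assumes A: "A \<in> carrier_mat n n" and d: "det A \<noteq> 0"
  shows "\<exists>B. B \<in> carrier_mat n n \<and> A * B = 1\<^sub>m n \<and> B * A = 1\<^sub>m n"
  using hol_inv[OF hol_mat_const[OF A, of "{0}"]] d A adj_mat(1)[OF A]
  by (intro exI[of _ "(1 / det A) \<cdot>\<^sub>m adj_mat A"]) auto

lemma downclosed:
  fixes S :: "nat set"
  assumes dc: "\<And>i j. i \<le> j \<Longrightarrow> j \<in> S \<Longrightarrow> i \<in> S" and fin: "finite S"
  shows "S = {..<card S}"
proof -
  define c where "c = (if S = {} then 0 else Suc (Max S))"
  have "S = {..<c}"
  proof (cases "S = {}")
    case False
    show ?thesis
    proof
      show "S \<subseteq> {..<c}" using False fin by (auto simp: c_def less_Suc_eq_le)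
      show "{..<c} \<subseteq> S" using False fin dc[of _ "Max S"] by (auto simp: c_def less_Suc_eq_le)
    qed
  qed (auto simp: c_def)
  then show ?thesis by simp
qed

definition Rev :: "nat \<Rightarrow> complex mat" where
  "Rev n = mat n n (\<lambda>(i,j). if i + j = n - 1 then 1 else 0)"

lemma Rev_left:
  assumes X: "X \<in> carrier_mat n nc"
  shows "Rev n * X = mat n nc (\<lambda>(i,j). X $$ (n - 1 - i, j))"
proof (rule eq_matI)
  fix i j assume ij: "i < dim_row (mat n nc (\<lambda>(i,j). X $$ (n - 1 - i, j)))" "j < dim_col (mat n nc (\<lambda>(i,j). X $$ (n - 1 - i, j)))"
  then have i: "i < n" and j: "j < nc" by auto
  have "(Rev n * X) $$ (i,j) = (\<Sum>k = 0..<n. (if i + k = n - 1 then 1 else 0) * X $$ (k,j))"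
    using X i j by (auto simp: Rev_def scalar_prod_def intro!: sum.cong)
  also have "\<dots> = (\<Sum>k = 0..<n. if k = n - 1 - i then X $$ (k,j) else 0)"
    using i by (intro sum.cong) auto
  also have "\<dots> = X $$ (n - 1 - i, j)" using i by (subst sum.delta) auto
  finally show "(Rev n * X) $$ (i,j) = mat n nc (\<lambda>(i,j). X $$ (n - 1 - i, j)) $$ (i,j)" using i j by simp
qed (use X in \<open>auto simp: Rev_def\<close>)

lemma Rev_right:
  assumes X: "X \<in> carrier_mat nr n"
  shows "X * Rev n = mat nr n (\<lambda>(i,j). X $$ (i, n - 1 - j))"
proof (rule eq_matI)
  fix i j assume ij: "i < dim_row (mat nr n (\<lambda>(i,j). X $$ (i, n - 1 - j)))" "j < dim_col (mat nr n (\<lambda>(i,j). X $$ (i, n - 1 - j)))"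
  then have i: "i < nr" and j: "j < n" by auto
  have "(X * Rev n) $$ (i,j) = (\<Sum>k = 0..<n. X $$ (i,k) * (if k + j = n - 1 then 1 else 0))"
    using X i j by (auto simp: Rev_def scalar_prod_def intro!: sum.cong)
  also have "\<dots> = (\<Sum>k = 0..<n. if k = n - 1 - j then X $$ (i,k) else 0)"
    using j by (intro sum.cong) auto
  also have "\<dots> = X $$ (i, n - 1 - j)" using j by (subst sum.delta) auto
  finally show "(X * Rev n) $$ (i,j) = mat nr n (\<lambda>(i,j). X $$ (i, n - 1 - j)) $$ (i,j)" using i j by simp
qed (use X in \<open>auto simp: Rev_def\<close>)

lemma Rev_carrier: "Rev n \<in> carrier_mat n n" by (simp add: Rev_def)

lemma Rev_Rev: "Rev n * Rev n = 1\<^sub>m n"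
  by (subst Rev_left[OF Rev_carrier], rule eq_matI) (auto simp: Rev_def)

lemma kernel_dim_diag:
  fixes m :: "nat \<Rightarrow> nat"
  assumes mono: "\<forall>i j. i \<le> j \<longrightarrow> j < n \<longrightarrow> m j \<le> m i"
  shows "kernel.dim n (mat_diag n (\<lambda>i. (0::complex) ^ m i)) = card {k. k < n \<and> 0 < m k}"
    "{k. k < n \<and> 0 < m k} = {..<card {k. k < n \<and> 0 < m k}}"
proof -
  have Sq0: "{k. k < n \<and> 0 < m k} = {..<card {k. k < n \<and> 0 < m k}}"
  proof (rule downclosed)
    fix i j assume "i \<le> j" "j \<in> {k. k < n \<and> 0 < m k}"
    then have "i < n" "m j \<le> m i" "0 < m j" using mono[rule_format, of i j] by auto
    then show "i \<in> {k. k < n \<and> 0 < m k}" by simp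
  qed auto
  then show "{k. k < n \<and> 0 < m k} = {..<card {k. k < n \<and> 0 < m k}}" .
  define S where "S = {k. k < n \<and> 0 < m k}"
  define q where "q = card S"
  have Sq: "S = {..<q}" using Sq0 unfolding q_def S_def .
  have "S \<subseteq> {..<n}" by (auto simp: S_def)
  from card_mono[OF finite_lessThan this] have qn: "q \<le> n" by (simp add: q_def)
  define p where "p = n - q"
  define E :: "complex mat" where "E = mat n n (\<lambda>(i,j). if i = j \<and> i < p then 1 else 0)"
  define D :: "complex mat" where "D = mat_diag n (\<lambda>i. (0::complex) ^ m i)"
  have Ec: "E \<in> carrier_mat n n" by (simp add: E_def)
  have Dc: "D \<in> carrier_mat n n" by (simp add: D_def)
  have mq: "(m i = 0) = (q \<le> i)" if "i < n" for i
  proof -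
    have "i \<in> S \<longleftrightarrow> i \<in> {..<q}" using Sq by blast
    then show ?thesis using that by (auto simp: S_def)
  qed
  have mq': "(0::complex) ^ m i = (if q \<le> i then 1 else 0)" if "i < n" for i
    using mq[OF that] by (cases "m i") auto
  have ar: "(n - Suc i < n - q) = (q \<le> i)" if "i < n" for i using that qn by arith
  have REc: "Rev n * E \<in> carrier_mat n n" by (rule mult_carrier_mat[OF Rev_carrier Ec])
  have DE: "D = Rev n * E * Rev n"
    apply (subst Rev_right[OF REc])
    apply (subst Rev_left[OF Ec])
    by (rule eq_matI) (auto simp: D_def mat_diag_def E_def p_def mq' ar)
  have "similar_mat_wit D E (Rev n) (Rev n)"
    by (rule similar_mat_witI[OF Rev_Rev Rev_Rev DE Dc Ec Rev_carrier Rev_carrier])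
  from similar_mat_wit_kernel_dim[OF Dc this]
  have kD: "kernel.dim n D = kernel.dim n E" .
  have kE: "kernel.dim n E = n - card {i. i < n \<and> row E i \<noteq> 0\<^sub>v n}"
  proof (rule find_base_vectors(6)[OF _ Ec])
    show "row_echelon_form E" unfolding row_echelon_form_def
      by (rule exI[of _ "\<lambda>i. if i < p then i else n"], rule pivot_funI[of _ n])
        (auto simp: E_def p_def split: if_splits)
  qed
  have rows: "{i. i < n \<and> row E i \<noteq> 0\<^sub>v n} = {..<p}"
  proof -
    have R: "row E i \<noteq> 0\<^sub>v n \<longleftrightarrow> i < p" if "i < n" for i
    proof
      assume "i < p" then have "row E i $ i = 1" using that by (simp add: E_def)
      then show "row E i \<noteq> 0\<^sub>v n" using that by auto
    next
      assume "row E i \<noteq> 0\<^sub>v n"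
      moreover have "\<not> i < p \<Longrightarrow> row E i = 0\<^sub>v n"
        by (rule eq_vecI) (use that in \<open>auto simp: E_def\<close>)
      ultimately show "i < p" by blast
    qed
    have pn: "p \<le> n" by (simp add: p_def)
    show ?thesis
    proof
      show "{i. i < n \<and> row E i \<noteq> 0\<^sub>v n} \<subseteq> {..<p}" using R by auto
      show "{..<p} \<subseteq> {i. i < n \<and> row E i \<noteq> 0\<^sub>v n}"
      proof
        fix x assume "x \<in> {..<p}" then have x: "x < n" "x < p" using pn by auto
        then show "x \<in> {i. i < n \<and> row E i \<noteq> 0\<^sub>v n}" using R[OF x(1)] by auto
      qed
    qed
  qed
  have cE: "card {i. i < n \<and> row E i \<noteq> 0\<^sub>v n} = p" unfolding rows by simp
  have "kernel.dim n D = n - p" using kD kE cE by metis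
  also have "n - p = card {k. k < n \<and> 0 < m k}" using qn by (simp add: p_def q_def S_def)
  finally show "kernel.dim n (mat_diag n (\<lambda>i. (0::complex) ^ m i)) = card {k. k < n \<and> 0 < m k}"
    unfolding D_def .
qed

lemma kernel_dim_smith:
  fixes T0 UL UR :: "complex mat" and m :: "nat \<Rightarrow> nat"
  assumes T0: "T0 \<in> carrier_mat n n" and UL: "UL \<in> carrier_mat n n" and UR: "UR \<in> carrier_mat n n"
    and dL: "det UL \<noteq> 0" and dR: "det UR \<noteq> 0"
    and eq: "UL * T0 * UR = mat_diag n (\<lambda>i. 0 ^ m i)"
    and mono: "\<forall>i j. i \<le> j \<longrightarrow> j < n \<longrightarrow> m j \<le> m i"
  shows "kernel_dim T0 \<le> n" "\<And>k. k < n \<Longrightarrow> 0 < m k \<longleftrightarrow> k < kernel_dim T0"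
proof -
  obtain ULi where ULi: "ULi \<in> carrier_mat n n" "ULi * UL = 1\<^sub>m n" using inv_exists[OF UL dL] by auto
  obtain URi where URi: "URi \<in> carrier_mat n n" "UR * URi = 1\<^sub>m n" using inv_exists[OF UR dR] by auto
  have 1: "kernel.dim n (UL * T0 * UR) = kernel.dim n (UL * T0)"
    by (rule mat_kernel_dim_mult_eq_right[OF mult_carrier_mat[OF UL T0] UR URi(1) URi(2)])
  have 2: "mat_kernel (UL * T0) = mat_kernel T0" by (rule mat_kernel_mult_eq[OF T0 UL ULi(1) ULi(2)])
  have 3: "kernel.dim n (UL * T0) = kernel.dim n T0" unfolding 2 by (rule refl)
  have 4: "kernel_dim T0 = kernel.dim n T0" using T0 unfolding kernel_dim_def by (simp only: carrier_matD)
  have 5: "kernel.dim n (UL * T0 * UR) = card {k. k < n \<and> 0 < m k}"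
    unfolding eq by (rule kernel_dim_diag(1)[OF mono])
  have kd: "kernel_dim T0 = card {k. k < n \<and> 0 < m k}"
    using 1 3 4 5 by linarith
  have cn: "card {k. k < n \<and> 0 < m k} \<le> n"
    using card_mono[of "{..<n}" "{k. k < n \<and> 0 < m k}"] by auto
  then show "kernel_dim T0 \<le> n" using kd by simp
  fix k assume "k < n"
  then show "0 < m k \<longleftrightarrow> k < kernel_dim T0"
  proof -
    have "k \<in> {k. k < n \<and> 0 < m k} \<longleftrightarrow> k \<in> {..<card {k. k < n \<and> 0 < m k}}"
      using kernel_dim_diag(2)[OF mono] by simp
    then show ?thesis using \<open>k < n\<close> kd by simp
  qed
qed




lemma pad_mult:
  fixes X0 :: "complex mat" and c :: "complex vec"
  assumes X0: "X0 \<in> carrier_mat n r" and p: "p \<le> r" and c: "c \<in> carrier_vec p" and k: "k < n"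
  shows "(X0 *\<^sub>v vec r (\<lambda>b. if b < p then c $ b else 0)) $ k = (\<Sum>b = 0..<p. X0 $$ (k,b) * c $ b)"
proof -
  have "(X0 *\<^sub>v vec r (\<lambda>b. if b < p then c $ b else 0)) $ k
      = (\<Sum>b = 0..<r. X0 $$ (k,b) * (if b < p then c $ b else 0))"
    using X0 k by (auto simp: scalar_prod_def intro!: sum.cong)
  also have "\<dots> = (\<Sum>b = 0..<p. X0 $$ (k,b) * (if b < p then c $ b else 0))"
    using p by (intro sum.mono_neutral_right) auto
  also have "\<dots> = (\<Sum>b = 0..<p. X0 $$ (k,b) * c $ b)" by (intro sum.cong) auto
  finally show ?thesis .
qed

lemma block_det:
  fixes X0 :: "complex mat"
  assumes X0: "X0 \<in> carrier_mat n r" and pr: "p \<le> r" and pn: "p \<le> n"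
    and indep: "\<forall>c\<in>carrier_vec r. X0 *\<^sub>v c = 0\<^sub>v n \<longrightarrow> c = 0\<^sub>v r"
    and Z: "\<And>k b. k < n \<Longrightarrow> b < p \<Longrightarrow> p \<le> k \<Longrightarrow> X0 $$ (k,b) = 0"
  shows "det (mat p p (\<lambda>(a,b). X0 $$ (a,b))) \<noteq> 0"
proof
  define M where "M = mat p p (\<lambda>(a,b). X0 $$ (a,b))"
  have Mc: "M \<in> carrier_mat p p" by (simp add: M_def)
  assume "det (mat p p (\<lambda>(a,b). X0 $$ (a,b))) = 0"
  then obtain c where c: "c \<in> carrier_vec p" "c \<noteq> 0\<^sub>v p" "M *\<^sub>v c = 0\<^sub>v p"
    using det_0_iff_vec_prod_zero[OF Mc] by (auto simp: M_def)
  define c' where "c' = vec r (\<lambda>b. if b < p then c $ b else 0)"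
  have "X0 *\<^sub>v c' = 0\<^sub>v n"
  proof (rule eq_vecI)
    fix k assume "k < dim_vec (0\<^sub>v n)" then have k: "k < n" by simp
    have "(X0 *\<^sub>v c') $ k = (\<Sum>b = 0..<p. X0 $$ (k,b) * c $ b)"
      unfolding c'_def by (rule pad_mult[OF X0 pr c(1) k])
    also have "\<dots> = 0"
    proof (cases "k < p")
      case True
      have "(M *\<^sub>v c) $ k = (\<Sum>b = 0..<p. X0 $$ (k,b) * c $ b)"
        using True c(1) by (auto simp: M_def scalar_prod_def intro!: sum.cong)
      then show ?thesis using c(3) True by simp
    next
      case False
      then show ?thesis using Z[OF k] by (intro sum.neutral) auto
    qed
    finally show "(X0 *\<^sub>v c') $ k = 0\<^sub>v n $ k" using k by simp
  qed (use X0 in auto)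
  moreover have "c' \<in> carrier_vec r" by (simp add: c'_def)
  ultimately have c0: "c' = 0\<^sub>v r" using indep by auto
  obtain b where b: "b < p" "c $ b \<noteq> 0" using c(1,2) by (metis eq_vecI carrier_vecD index_zero_vec)
  have "c' $ b = c $ b" using b pr by (simp add: c'_def)
  moreover have "c' $ b = 0" using c0 b pr by simp
  ultimately show False using b by simp
qed

lemma zero_row_det:
  fixes M :: "complex mat"
  assumes M: "M \<in> carrier_mat p p" and k: "k < p" and Z: "\<And>b. b < p \<Longrightarrow> M $$ (k,b) = 0"
  shows "det M = 0"
proof -
  define v :: "complex vec" where "v = vec p (\<lambda>i. if i = k then 1 else 0)"
  have "transpose_mat M *\<^sub>v v = 0\<^sub>v p"
  proof (rule eq_vecI)
    fix i assume "i < dim_vec (0\<^sub>v p)" then have i: "i < p" by simp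
    have "(transpose_mat M *\<^sub>v v) $ i = (\<Sum>a = 0..<p. M $$ (a,i) * (if a = k then 1 else 0))"
      using M i by (auto simp: v_def scalar_prod_def intro!: sum.cong)
    also have "\<dots> = (\<Sum>a = 0..<p. if a = k then M $$ (a,i) else 0)" by (intro sum.cong) auto
    also have "\<dots> = 0" using k Z[OF i] by (subst sum.delta) auto
    finally show "(transpose_mat M *\<^sub>v v) $ i = 0\<^sub>v p $ i" using i by simp
  qed (use M in auto)
  moreover have "v \<noteq> 0\<^sub>v p"
  proof
    assume "v = 0\<^sub>v p" then have "v $ k = 0" using k by simp
    then show False using k by (simp add: v_def)
  qed
  moreover have "v \<in> carrier_vec p" by (simp add: v_def)
  ultimately have "det (transpose_mat M) = 0"
    using det_0_iff_vec_prod_zero[of "transpose_mat M" p] M by auto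
  then show ?thesis using det_transpose[OF M] by simp
qed

lemma nu_le_m:
  fixes X0 :: "complex mat" and nu m :: "nat \<Rightarrow> nat"
  assumes X0: "X0 \<in> carrier_mat n r" and rn: "r \<le> n"
    and indep: "\<forall>c\<in>carrier_vec r. X0 *\<^sub>v c = 0\<^sub>v n \<longrightarrow> c = 0\<^sub>v r"
    and Z: "\<And>k i. k < n \<Longrightarrow> i < r \<Longrightarrow> m k < nu i \<Longrightarrow> X0 $$ (k,i) = 0"
    and mm: "\<forall>i j. i \<le> j \<longrightarrow> j < n \<longrightarrow> m j \<le> m i"
    and num: "\<forall>i j. i \<le> j \<longrightarrow> j < r \<longrightarrow> nu j \<le> nu i"
    and i: "i < r"
  shows "nu i \<le> m i"
proof (rule ccontr)
  assume "\<not> nu i \<le> m i"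
  then have lt: "m i < nu i" by simp
  define p where "p = Suc i"
  have pr: "p \<le> r" and pn: "p \<le> n" using i rn by (auto simp: p_def)
  have Zb: "X0 $$ (k,b) = 0" if "k < n" "b < p" "p \<le> k" for k b
  proof (rule Z)
    show "k < n" by fact
    show "b < r" using that pr by simp
    have "m k \<le> m i" using mm that by (auto simp: p_def)
    also have "\<dots> < nu i" by fact
    also have "nu i \<le> nu b" using num that i by (auto simp: p_def)
    finally show "m k < nu b" .
  qed
  have "det (mat p p (\<lambda>(a,b). X0 $$ (a,b))) \<noteq> 0" by (rule block_det[OF X0 pr pn indep Zb])
  moreover have "det (mat p p (\<lambda>(a,b). X0 $$ (a,b))) = 0"
  proof (rule zero_row_det[of _ p i])
    show "i < p" by (simp add: p_def)
    fix b assume b: "b < p"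
    have "X0 $$ (i,b) = 0"
    proof (rule Z)
      show "i < n" using i rn by simp
      show "b < r" using b pr by simp
      have "nu i \<le> nu b" using num b i by (auto simp: p_def)
      then show "m i < nu b" using lt by simp
    qed
    then show "mat p p (\<lambda>(a,b). X0 $$ (a,b)) $$ (i,b) = 0" using b by (simp add: p_def)
  qed simp
  ultimately show False by simp
qed

lemma solve_block:
  fixes X0 A :: "complex mat"
  assumes X0: "X0 \<in> carrier_mat n r" and qr: "q \<le> r" and qn: "q \<le> n"
    and indep: "\<forall>c\<in>carrier_vec r. X0 *\<^sub>v c = 0\<^sub>v n \<longrightarrow> c = 0\<^sub>v r"
    and Z: "\<And>k b. k < n \<Longrightarrow> b < q \<Longrightarrow> q \<le> k \<Longrightarrow> X0 $$ (k,b) = 0"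
    and A: "A \<in> carrier_mat n n'"
    and ZA: "\<And>k l. k < n \<Longrightarrow> q \<le> k \<Longrightarrow> l < n' \<Longrightarrow> A $$ (k,l) = 0"
  shows "\<exists>C. C \<in> carrier_mat r n' \<and> X0 * C = A \<and> (\<forall>i l. i < r \<longrightarrow> q \<le> i \<longrightarrow> l < n' \<longrightarrow> C $$ (i,l) = 0)"
proof -
  define M where "M = mat q q (\<lambda>(a,b). X0 $$ (a,b))"
  have Mc: "M \<in> carrier_mat q q" by (simp add: M_def)
  have "det M \<noteq> 0" unfolding M_def by (rule block_det[OF X0 qr qn indep Z])
  then obtain Mi where Mi: "Mi \<in> carrier_mat q q" "M * Mi = 1\<^sub>m q" using inv_exists[OF Mc] by auto
  define At where "At = mat q n' (\<lambda>(a,l). A $$ (a,l))"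
  have Atc: "At \<in> carrier_mat q n'" by (simp add: At_def)
  define B where "B = Mi * At"
  have Bc: "B \<in> carrier_mat q n'" using Mi(1) Atc by (simp add: B_def)
  have MB: "M * B = At" unfolding B_def
    using assoc_mult_mat[OF Mc Mi(1) Atc, symmetric] Mi(2) Atc by simp
  define C where "C = mat r n' (\<lambda>(i,l). if i < q then B $$ (i,l) else 0)"
  show ?thesis
  proof (intro exI[of _ C] conjI allI impI)
    show "C \<in> carrier_mat r n'" by (simp add: C_def)
    show "X0 * C = A"
    proof (rule eq_matI)
      fix k l assume "k < dim_row A" "l < dim_col A"
      then have k: "k < n" and l: "l < n'" using A by auto
      have "(X0 * C) $$ (k,l) = (\<Sum>b = 0..<r. X0 $$ (k,b) * (if b < q then B $$ (b,l) else 0))"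
        using X0 k l by (auto simp: C_def scalar_prod_def intro!: sum.cong)
      also have "\<dots> = (\<Sum>b = 0..<q. X0 $$ (k,b) * (if b < q then B $$ (b,l) else 0))"
        using qr by (intro sum.mono_neutral_right) auto
      also have "\<dots> = (\<Sum>b = 0..<q. X0 $$ (k,b) * B $$ (b,l))" by (intro sum.cong) auto
      also have "\<dots> = A $$ (k,l)"
      proof (cases "k < q")
        case True
        have "(M * B) $$ (k,l) = (\<Sum>b = 0..<q. X0 $$ (k,b) * B $$ (b,l))"
          using True l Bc by (auto simp: M_def scalar_prod_def intro!: sum.cong)
        then show ?thesis using MB True l by (simp add: At_def)
      next
        case False
        then show ?thesis using Z[OF k] ZA[OF k _ l] by (auto intro!: sum.neutral)
      qed
      finally show "(X0 * C) $$ (k,l) = A $$ (k,l)" .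
    qed (use X0 A in \<open>auto simp: C_def\<close>)
    fix i l assume "i < r" "q \<le> i" "l < n'"
    then show "C $$ (i,l) = 0" by (simp add: C_def)
  qed
qed




lemma hol_vec_col:
  assumes A: "hol_mat S p q A" and i: "i < q"
  shows "hol_vec S p (\<lambda>z. col (A z) i)"
  unfolding hol_vec_def
proof (intro conjI allI impI)
  fix z show "col (A z) i \<in> carrier_vec p" using hol_matD(1)[OF A, of z] by auto
next
  fix a assume a: "a < p"
  have "(\<lambda>z. col (A z) i $ a) = (\<lambda>z. A z $$ (a,i))"
  proof
    fix z have "A z \<in> carrier_mat p q" by (rule hol_matD(1)[OF A])
    then show "col (A z) i $ a = A z $$ (a,i)" using a i by auto
  qed
  then show "(\<lambda>z. col (A z) i $ a) holomorphic_on S" using hol_matD(2)[OF A a i] by simp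
qed

lemma hol_avoid:
  fixes f :: "complex \<Rightarrow> complex"
  assumes "f holomorphic_on S" "open S" "z0 \<in> S" "f z0 \<noteq> 0"
  shows "\<exists>d>0. \<forall>z\<in>ball z0 d. f z \<noteq> 0"
proof -
  have "continuous (at z0) f"
    using assms holomorphic_on_imp_continuous_on continuous_on_eq_continuous_at by blast
  from continuous_at_avoid[OF this assms(4)] show ?thesis by (auto simp: dist_commute)
qed

lemma mat_inverse_the:
  fixes A :: "complex mat"
  assumes A: "A \<in> carrier_mat n n" and d: "det A \<noteq> 0"
  shows "the (mat_inverse A) \<in> carrier_mat n n" "A * the (mat_inverse A) = 1\<^sub>m n" "the (mat_inverse A) * A = 1\<^sub>m n"
proof -
  have U: "A \<in> Units (ring_mat TYPE(complex) n ())" by (rule det_non_zero_imp_unit[OF A d])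
  have "mat_inverse A \<noteq> None"
  proof
    assume "mat_inverse A = None"
    then have "A \<notin> Units (ring_mat TYPE(complex) n ())" by (rule mat_inverse(1)[OF A])
    with U show False by simp
  qed
  then obtain B where "mat_inverse A = Some B" by auto
  from mat_inverse(2)[OF A this] this
  show "the (mat_inverse A) \<in> carrier_mat n n" "A * the (mat_inverse A) = 1\<^sub>m n" "the (mat_inverse A) * A = 1\<^sub>m n"
    by auto
qed

lemma diag_inv:
  fixes s :: complex
  assumes "s \<noteq> 0"
  shows "mat_diag n (\<lambda>i. 1 / s ^ m i) * mat_diag n (\<lambda>i. s ^ m i) = 1\<^sub>m n"
    "mat_diag n (\<lambda>i. s ^ m i) * mat_diag n (\<lambda>i. 1 / s ^ m i) = 1\<^sub>m n"
  unfolding mat_diag_diag using assms by (auto intro!: eq_matI simp: mat_diag_def)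

lemma WTi_alg:
  fixes UL T UR W Ti D Dinv :: "complex mat"
  assumes c: "UL \<in> carrier_mat n n" "T \<in> carrier_mat n n" "UR \<in> carrier_mat n n" "W \<in> carrier_mat n n"
    "Ti \<in> carrier_mat n n" "D \<in> carrier_mat n n" "Dinv \<in> carrier_mat n n"
    and e: "UL * T * UR = D" "UR * W = 1\<^sub>m n" "T * Ti = 1\<^sub>m n" "Dinv * D = 1\<^sub>m n"
  shows "W * Ti = Dinv * UL"
proof -
  have ULT: "UL * T \<in> carrier_mat n n" by (rule mult_carrier_mat[OF c(1,2)])
  have WTi: "W * Ti \<in> carrier_mat n n" by (rule mult_carrier_mat[OF c(4,5)])
  have "UL * T = (UL * T) * (UR * W)" unfolding e(2) by (rule right_mult_one_mat[OF ULT, symmetric])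
  also have "\<dots> = ((UL * T) * UR) * W" by (rule assoc_mult_mat[OF ULT c(3) c(4), symmetric])
  also have "\<dots> = D * W" unfolding e(1) ..
  finally have 1: "UL * T = D * W" .
  have "UL = UL * (T * Ti)" unfolding e(3) by (rule right_mult_one_mat[OF c(1), symmetric])
  also have "\<dots> = (UL * T) * Ti" by (rule assoc_mult_mat[OF c(1) c(2) c(5), symmetric])
  also have "\<dots> = D * W * Ti" unfolding 1 ..
  finally have 2: "UL = D * W * Ti" .
  have "Dinv * UL = Dinv * (D * W * Ti)" by (rule arg_cong[OF 2])
  also have "\<dots> = Dinv * (D * (W * Ti))" unfolding assoc_mult_mat[OF c(6) c(4) c(5)] ..
  also have "\<dots> = (Dinv * D) * (W * Ti)" by (rule assoc_mult_mat[OF c(7) c(6) WTi, symmetric])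
  also have "\<dots> = W * Ti" unfolding e(4) by (rule left_mult_one_mat[OF WTi])
  finally show ?thesis by (rule sym)
qed

lemma WG_alg:
  fixes UL T UR W Ti D Dinv Y Hm Dg Di V :: "complex mat"
  assumes c: "UL \<in> carrier_mat n n" "T \<in> carrier_mat n n" "UR \<in> carrier_mat n n" "W \<in> carrier_mat n n"
    "Ti \<in> carrier_mat n n" "D \<in> carrier_mat n n" "Dinv \<in> carrier_mat n n"
    "Y \<in> carrier_mat n r" "Hm \<in> carrier_mat n r" "Dg \<in> carrier_mat r r" "Di \<in> carrier_mat r r"
    "V \<in> carrier_mat r n"
    and e: "UL * T * UR = D" "UR * W = 1\<^sub>m n" "T * Ti = 1\<^sub>m n" "Dinv * D = 1\<^sub>m n"
      "Ti * T = 1\<^sub>m n" "T * Y = Hm * Dg" "Dg * Di = 1\<^sub>m r"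
  shows "W * (Ti - Y * Di * V) = Dinv * (UL - UL * Hm * V)"
proof -
  have 1: "W * Ti = Dinv * UL" by (rule WTi_alg[OF c(1-7) e(1-4)])
  have TY: "T * Y \<in> carrier_mat n r" by (rule mult_carrier_mat[OF c(2) c(8)])
  have WTi: "W * Ti \<in> carrier_mat n n" by (rule mult_carrier_mat[OF c(4,5)])
  have DU: "Dinv * UL \<in> carrier_mat n n" by (rule mult_carrier_mat[OF c(7,1)])
  have HD: "Hm * Dg \<in> carrier_mat n r" by (rule mult_carrier_mat[OF c(9,10)])
  have DUH: "Dinv * UL * Hm \<in> carrier_mat n r" by (rule mult_carrier_mat[OF DU c(9)])
  have UH: "UL * Hm \<in> carrier_mat n r" by (rule mult_carrier_mat[OF c(1,9)])
  have YD: "Y * Di \<in> carrier_mat n r" by (rule mult_carrier_mat[OF c(8,11)])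
  have WY: "W * Y \<in> carrier_mat n r" by (rule mult_carrier_mat[OF c(4,8)])
  have "W * Y = W * ((Ti * T) * Y)" unfolding e(5) left_mult_one_mat[OF c(8)] ..
  also have "\<dots> = W * (Ti * (T * Y))" unfolding assoc_mult_mat[OF c(5) c(2) c(8)] ..
  also have "\<dots> = (W * Ti) * (T * Y)" by (rule assoc_mult_mat[OF c(4) c(5) TY, symmetric])
  also have "\<dots> = (Dinv * UL) * (Hm * Dg)" unfolding 1 e(6) ..
  also have "\<dots> = (Dinv * UL * Hm) * Dg" by (rule assoc_mult_mat[OF DU c(9) c(10), symmetric])
  finally have 2: "W * Y = (Dinv * UL * Hm) * Dg" .
  have "W * (Y * Di * V) = (W * (Y * Di)) * V" by (rule assoc_mult_mat[OF c(4) YD c(12), symmetric])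
  also have "W * (Y * Di) = (W * Y) * Di" by (rule assoc_mult_mat[OF c(4) c(8) c(11), symmetric])
  also have "\<dots> = (Dinv * UL * Hm) * (Dg * Di)" unfolding 2 by (rule assoc_mult_mat[OF DUH c(10) c(11)])
  also have "\<dots> = Dinv * UL * Hm" unfolding e(7) by (rule right_mult_one_mat[OF DUH])
  also have "Dinv * UL * Hm = Dinv * (UL * Hm)" by (rule assoc_mult_mat[OF c(7) c(1) c(9)])
  also have "(Dinv * (UL * Hm)) * V = Dinv * (UL * Hm * V)" by (rule assoc_mult_mat[OF c(7) UH c(12)])
  finally have 3: "W * (Y * Di * V) = Dinv * (UL * Hm * V)" .
  have UHV: "UL * Hm * V \<in> carrier_mat n n" by (rule mult_carrier_mat[OF UH c(12)])
  have YDV: "Y * Di * V \<in> carrier_mat n n" by (rule mult_carrier_mat[OF YD c(12)])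
  have "W * (Ti - Y * Di * V) = W * Ti - W * (Y * Di * V)"
    by (rule mult_minus_distrib_mat[OF c(4) c(5) YDV])
  also have "\<dots> = Dinv * UL - Dinv * (UL * Hm * V)" unfolding 1 3 ..
  also have "\<dots> = Dinv * (UL - UL * Hm * V)"
    by (rule mult_minus_distrib_mat[OF c(7) c(1) UHV, symmetric])
  finally show ?thesis .
qed




lemma DWY_alg:
  fixes UL T UR W Y D :: "complex mat"
  assumes c: "UL \<in> carrier_mat n n" "T \<in> carrier_mat n n" "UR \<in> carrier_mat n n" "W \<in> carrier_mat n n"
    "Y \<in> carrier_mat n r"
    and e: "UL * T * UR = D" "UR * W = 1\<^sub>m n"
  shows "D * (W * Y) = UL * (T * Y)"
proof -
  have ULT: "UL * T \<in> carrier_mat n n" by (rule mult_carrier_mat[OF c(1,2)])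
  have WY: "W * Y \<in> carrier_mat n r" by (rule mult_carrier_mat[OF c(4,5)])
  have "D * (W * Y) = ((UL * T) * UR) * (W * Y)" unfolding e(1) ..
  also have "\<dots> = (UL * T) * (UR * (W * Y))" by (rule assoc_mult_mat[OF ULT c(3) WY])
  also have "UR * (W * Y) = (UR * W) * Y" by (rule assoc_mult_mat[OF c(3) c(4) c(5), symmetric])
  also have "\<dots> = Y" unfolding e(2) by (rule left_mult_one_mat[OF c(5)])
  also have "(UL * T) * Y = UL * (T * Y)" by (rule assoc_mult_mat[OF c(1) c(2) c(5)])
  finally show ?thesis .
qed

lemma sum_le_eq:
  fixes f g :: "nat \<Rightarrow> nat"
  assumes "\<And>i. i < r \<Longrightarrow> f i \<le> g i" "(\<Sum>i<r. f i) = (\<Sum>i<r. g i)" "i < r"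
  shows "f i = g i"
proof (rule ccontr)
  assume "f i \<noteq> g i"
  then have "f i < g i" using assms(1)[OF assms(3)] by simp
  then have "(\<Sum>i<r. f i) < (\<Sum>i<r. g i)"
    using assms by (intro sum_strict_mono_ex1) auto
  then show False using assms(2) by simp
qed

theorem mainTheorem17:
  fixes \<Omega> :: "complex set" and z0 :: complex and n j :: nat and m :: "nat \<Rightarrow> nat"
    and T Y V :: "complex \<Rightarrow> complex mat"
  assumes "open \<Omega>" and "z0 \<in> \<Omega>"
    and "hol_mat \<Omega> n n T"
    and "\<exists>z\<in>\<Omega>. det (T z) \<noteq> 0"
    and "det (T z0) = 0"
    and "partial_multiplicities T z0 n m"
    and "right_canonical \<Omega> T z0 n m Y"
    and "hol_mat \<Omega> (kernel_dim (T z0)) n V"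
    and "j \<ge> 1"
    and "pole_order_eq n z0 (resid_fun T z0 (kernel_dim (T z0)) m Y V) j"
  shows "\<exists>Vt. hol_mat \<Omega> (kernel_dim (T z0)) n Vt \<and>
           pole_order_le n z0 (resid_fun T z0 (kernel_dim (T z0)) m Y Vt) (j - 1)"
proof -
  define r where "r = kernel_dim (T z0)"
  note Thol = assms(3)
  have Vhol: "hol_mat \<Omega> r n V" using assms(8) by (simp add: r_def)
  have PM: "(\<forall>i j. i \<le> j \<longrightarrow> j < n \<longrightarrow> m j \<le> m i) \<and>
     (\<exists>e>0. \<exists>UL UR. hol_mat (ball z0 e) n n UL \<and> hol_mat (ball z0 e) n n UR \<and>
        det (UL z0) \<noteq> 0 \<and> det (UR z0) \<noteq> 0 \<and>
        (\<forall>z\<in>ball z0 e. UL z * T z * UR z = mat_diag n (\<lambda>i. (z - z0) ^ m i)))"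
    using assms(6) unfolding partial_multiplicities_def .
  have mono_m: "\<forall>i j. i \<le> j \<longrightarrow> j < n \<longrightarrow> m j \<le> m i" using PM by (rule conjunct1)
  obtain e1 UL UR where e1: "e1 > 0"
    and ULh: "hol_mat (ball z0 e1) n n UL" and URh: "hol_mat (ball z0 e1) n n UR"
    and dL: "det (UL z0) \<noteq> 0" and dR: "det (UR z0) \<noteq> 0"
    and smith': "\<forall>z\<in>ball z0 e1. UL z * T z * UR z = mat_diag n (\<lambda>i. (z - z0) ^ m i)"
    using conjunct2[OF PM] by (elim exE conjE) 
  have smith: "\<And>z. z \<in> ball z0 e1 \<Longrightarrow> UL z * T z * UR z = mat_diag n (\<lambda>i. (z - z0) ^ m i)"
    using smith' by blast
  define nu where "nu i = root_mult T z0 n (\<lambda>z. col (Y z) i)" for i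
  have RC: "hol_mat \<Omega> n r Y \<and>
      (\<forall>i<r. root_function \<Omega> T z0 n (\<lambda>z. col (Y z) i)) \<and>
      (\<forall>c\<in>carrier_vec r. Y z0 *\<^sub>v c = 0\<^sub>v n \<longrightarrow> c = 0\<^sub>v r) \<and>
      (\<Sum>i<r. nu i) = (\<Sum>i<r. m i) \<and>
      (\<forall>i j. i \<le> j \<longrightarrow> j < r \<longrightarrow> nu j \<le> nu i)"
    using assms(7) unfolding right_canonical_def Let_def r_def[symmetric] nu_def .
  have Yhol: "hol_mat \<Omega> n r Y" using RC by (rule conjunct1)
  have Yroot: "\<And>i. i < r \<Longrightarrow> root_function \<Omega> T z0 n (\<lambda>z. col (Y z) i)"
    using conjunct1[OF conjunct2[OF RC]] by blast
  have Yind: "\<forall>c\<in>carrier_vec r. Y z0 *\<^sub>v c = 0\<^sub>v n \<longrightarrow> c = 0\<^sub>v r"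
    using conjunct1[OF conjunct2[OF conjunct2[OF RC]]] .
  have Ysum: "(\<Sum>i<r. nu i) = (\<Sum>i<r. m i)"
    using conjunct1[OF conjunct2[OF conjunct2[OF conjunct2[OF RC]]]] .
  have Ymono: "\<forall>i j. i \<le> j \<longrightarrow> j < r \<longrightarrow> nu j \<le> nu i"
    using conjunct2[OF conjunct2[OF conjunct2[OF conjunct2[OF RC]]]] .
  have "pole_order_le n z0 (resid_fun T z0 r m Y V) j"
    using assms(10) unfolding pole_order_eq_def r_def by (rule conjunct1)
  then obtain e2 G where e2: "e2 > 0" and Ghol: "hol_mat (ball z0 e2) n n G"
    and Geq': "\<forall>z\<in>ball z0 e2 - {z0}. (z - z0) ^ j \<cdot>\<^sub>m resid_fun T z0 r m Y V z = G z"
    unfolding pole_order_le_def by (elim exE conjE)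
  have Geq: "\<And>z. z \<in> ball z0 e2 - {z0} \<Longrightarrow> (z - z0) ^ j \<cdot>\<^sub>m resid_fun T z0 r m Y V z = G z"
    using Geq' by blast
  obtain eO where eO: "eO > 0" "ball z0 eO \<subseteq> \<Omega>" using assms(1,2) open_contains_ball by blast
  obtain dl where dl: "dl > 0" "\<And>z. z \<in> ball z0 dl \<Longrightarrow> det (UL z) \<noteq> 0"
    using hol_avoid[OF hol_det[OF ULh] open_ball _ dL] e1 by auto
  obtain dr where dr: "dr > 0" "\<And>z. z \<in> ball z0 dr \<Longrightarrow> det (UR z) \<noteq> 0"
    using hol_avoid[OF hol_det[OF URh] open_ball _ dR] e1 by auto
  define e0 where "e0 = min (min e1 e2) (min eO (min dl dr))"
  have e0: "e0 > 0" using e1 e2 eO dl dr by (simp add: e0_def)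
  have B1: "ball z0 e0 \<subseteq> ball z0 e1" and B2: "ball z0 e0 \<subseteq> ball z0 e2" and BO: "ball z0 e0 \<subseteq> \<Omega>"
    and Bl: "ball z0 e0 \<subseteq> ball z0 dl" and Br: "ball z0 e0 \<subseteq> ball z0 dr"
    using eO by (auto simp: e0_def)
  define B where "B = ball z0 e0"
  have z0B: "z0 \<in> B" using e0 by (simp add: B_def)
  define W where "W z = (1 / det (UR z)) \<cdot>\<^sub>m adj_mat (UR z)" for z
  have URB: "hol_mat B n n UR" using hol_mat_subset[OF URh B1] by (simp add: B_def)
  have ULB: "hol_mat B n n UL" using hol_mat_subset[OF ULh B1] by (simp add: B_def)
  have TB: "hol_mat B n n T" using hol_mat_subset[OF Thol BO] by (simp add: B_def)
  have YB: "hol_mat B n r Y" using hol_mat_subset[OF Yhol BO] by (simp add: B_def)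
  have VB: "hol_mat B r n V" using hol_mat_subset[OF Vhol BO] by (simp add: B_def)
  have GB: "hol_mat B n n G" using hol_mat_subset[OF Ghol B2] by (simp add: B_def)
  have dRB: "\<And>z. z \<in> B \<Longrightarrow> det (UR z) \<noteq> 0" using dr Br by (auto simp: B_def)
  have dLB: "\<And>z. z \<in> B \<Longrightarrow> det (UL z) \<noteq> 0" using dl Bl by (auto simp: B_def)
  have WB: "hol_mat B n n W" and URW: "\<And>z. z \<in> B \<Longrightarrow> UR z * W z = 1\<^sub>m n"
    and WUR: "\<And>z. z \<in> B \<Longrightarrow> W z * UR z = 1\<^sub>m n"
    using hol_inv[OF URB dRB] unfolding W_def by auto
  have Tc: "\<And>z. T z \<in> carrier_mat n n" using hol_matD(1)[OF Thol] .
  have ULc: "\<And>z. UL z \<in> carrier_mat n n" using hol_matD(1)[OF ULh] .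
  have URc: "\<And>z. UR z \<in> carrier_mat n n" using hol_matD(1)[OF URh] .
  have Wc: "\<And>z. W z \<in> carrier_mat n n" using hol_matD(1)[OF WB] .
  have Yc: "\<And>z. Y z \<in> carrier_mat n r" using hol_matD(1)[OF Yhol] .
  have Vc: "\<And>z. V z \<in> carrier_mat r n" using hol_matD(1)[OF Vhol] .
  have Gc: "\<And>z. G z \<in> carrier_mat n n" using hol_matD(1)[OF Ghol] .
  define D where "D z = mat_diag n (\<lambda>i. (z - z0) ^ m i)" for z
  define Dinv where "Dinv z = mat_diag n (\<lambda>i. 1 / (z - z0) ^ m i)" for z
  have smithB: "\<And>z. z \<in> B \<Longrightarrow> UL z * T z * UR z = D z" using smith B1 by (auto simp: B_def D_def)
  have DinvD: "\<And>z. z \<noteq> z0 \<Longrightarrow> Dinv z * D z = 1\<^sub>m n" "\<And>z. z \<noteq> z0 \<Longrightarrow> D z * Dinv z = 1\<^sub>m n"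
    unfolding D_def Dinv_def using diag_inv by auto
  have Tdet: "det (T z) \<noteq> 0" if z: "z \<in> B" "z \<noteq> z0" for z
  proof
    assume dT: "det (T z) = 0"
    have "det (D z) = det (UL z * T z * UR z)" using smithB[OF z(1)] by simp
    also have "\<dots> = det (UL z * T z) * det (UR z)"
      by (rule det_mult[OF mult_carrier_mat[OF ULc Tc] URc])
    also have "det (UL z * T z) = det (UL z) * det (T z)" by (rule det_mult[OF ULc Tc])
    finally have "det (D z) = 0" using dT by simp
    moreover have "det (D z * Dinv z) = det (D z) * det (Dinv z)"
      by (rule det_mult[of _ n]) (auto simp: D_def Dinv_def)
    ultimately show False using DinvD(2)[OF z(2)] by simp
  qed
  define Ti where "Ti z = the (mat_inverse (T z))" for z
  have Tic: "Ti z \<in> carrier_mat n n" and TTi: "T z * Ti z = 1\<^sub>m n" and TiT: "Ti z * T z = 1\<^sub>m n"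
    if "z \<in> B" "z \<noteq> z0" for z
    using mat_inverse_the[OF Tc Tdet[OF that]] unfolding Ti_def by auto
  have nu_spec: "vec_zero_order n z0 (\<lambda>z. T z *\<^sub>v col (Y z) i) (nu i)" if i: "i < r" for i
  proof -
    define y where "y z = col (Y z) i" for z
    have yh: "hol_vec \<Omega> n y" and y0: "y z0 \<noteq> 0\<^sub>v n"
      using Yroot[OF i] unfolding root_function_def y_def by auto
    have yc: "y z \<in> carrier_vec n" for z using hol_vecD(1)[OF yh] .
    obtain l where l: "l < n" "y z0 $ l \<noteq> 0" using y0 yc[of z0] by (metis eq_vecI carrier_vecD index_zero_vec)
    obtain dd where dd: "dd > 0" "\<And>z. z \<in> ball z0 dd \<Longrightarrow> y z $ l \<noteq> 0"
      using hol_avoid[OF hol_vecD(2)[OF yh l(1)] assms(1,2) l(2)] by auto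
    define z1 where "z1 = z0 + of_real (min e0 dd / 2)"
    have z1: "z1 \<in> B" "z1 \<noteq> z0" "z1 \<in> ball z0 dd" using e0 dd(1)
      by (auto simp: z1_def B_def dist_norm)
    have "y z1 \<noteq> 0\<^sub>v n" using dd(2)[OF z1(3)] l(1) by auto
    have g1: "T z1 *\<^sub>v y z1 \<noteq> 0\<^sub>v n"
    proof
      assume "T z1 *\<^sub>v y z1 = 0\<^sub>v n"
      then have "Ti z1 *\<^sub>v (T z1 *\<^sub>v y z1) = 0\<^sub>v n" using Tic[OF z1(1,2)]
        by (intro eq_vecI) (auto simp: carrier_matD)
      also have "Ti z1 *\<^sub>v (T z1 *\<^sub>v y z1) = y z1"
        using assoc_mult_mat_vec[OF Tic[OF z1(1,2)] Tc yc, symmetric] TiT[OF z1(1,2)] yc by simp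
      finally show False using \<open>y z1 \<noteq> 0\<^sub>v n\<close> by simp
    qed
    have gh: "hol_vec B n (\<lambda>z. T z *\<^sub>v y z)"
    proof -
      have "hol_vec B n (\<lambda>z. col (T z * Y z) i)" by (rule hol_vec_col[OF hol_mat_mult[OF TB YB] i])
      moreover have "col (T z * Y z) i = T z *\<^sub>v y z" for z
        using col_mult2[OF Tc Yc i] by (simp add: y_def)
      ultimately show ?thesis by simp
    qed
    show ?thesis
      using root_mult_spec[OF gh[unfolded B_def] e0 z1(1)[unfolded B_def] g1, of T "\<lambda>z. col (Y z) i"]
      unfolding nu_def y_def by simp
  qed
  have "\<forall>i\<in>{..<r}. \<exists>e h. e > 0 \<and> hol_vec (ball z0 e) n h \<and> h z0 \<noteq> 0\<^sub>v n \<and>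
        (\<forall>z\<in>ball z0 e. T z *\<^sub>v col (Y z) i = (z - z0) ^ nu i \<cdot>\<^sub>v h z)"
    using nu_spec unfolding vec_zero_order_def by blast
  from bchoice[OF this] obtain EE where "\<forall>i\<in>{..<r}. \<exists>h. EE i > 0 \<and> hol_vec (ball z0 (EE i)) n h \<and> h z0 \<noteq> 0\<^sub>v n \<and>
        (\<forall>z\<in>ball z0 (EE i). T z *\<^sub>v col (Y z) i = (z - z0) ^ nu i \<cdot>\<^sub>v h z)"
    by blast
  from bchoice[OF this] obtain HH where EH: "\<forall>i\<in>{..<r}. EE i > 0 \<and> hol_vec (ball z0 (EE i)) n (HH i) \<and>
        (\<forall>z\<in>ball z0 (EE i). T z *\<^sub>v col (Y z) i = (z - z0) ^ nu i \<cdot>\<^sub>v HH i z)"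
    by blast
  define eh where "eh = Min (insert e0 (EE ` {..<r}))"
  have eh: "eh > 0" using EH e0 unfolding eh_def by (subst Min_gr_iff) auto
  have ehe0: "eh \<le> e0" unfolding eh_def by (rule Min_le) auto
  have ehE: "\<And>i. i < r \<Longrightarrow> eh \<le> EE i" unfolding eh_def by (rule Min_le) auto
  define Bh where "Bh = ball z0 eh"
  have BhB: "Bh \<subseteq> B" using ehe0 by (auto simp: Bh_def B_def)
  have z0Bh: "z0 \<in> Bh" using eh by (simp add: Bh_def)
  have BhE: "Bh \<subseteq> ball z0 (EE i)" if "i < r" for i
    using ehE[OF that] by (auto simp: Bh_def)
  define Hm where "Hm z = mat n r (\<lambda>(l,i). HH i z $ l)" for z
  have Hmh: "hol_mat Bh n r Hm" unfolding Hm_def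
  proof (rule hol_mat_mat)
    fix l i assume li: "l < n" "i < r"
    have "hol_vec (ball z0 (EE i)) n (HH i)" using EH li by auto
    from hol_vecD(2)[OF this li(1)] show "(\<lambda>z. HH i z $ l) holomorphic_on Bh"
      using BhE[OF li(2)] holomorphic_on_subset by blast
  qed
  have Hmc: "\<And>z. Hm z \<in> carrier_mat n r" by (simp add: Hm_def)
  define Dg where "Dg z = mat_diag r (\<lambda>i. (z - z0) ^ nu i)" for z
  have TY: "T z * Y z = Hm z * Dg z" if z: "z \<in> Bh" for z
  proof (rule eq_matI)
    fix l i assume "l < dim_row (Hm z * Dg z)" "i < dim_col (Hm z * Dg z)"
    then have li: "l < n" "i < r" by (auto simp: Hm_def Dg_def mat_diag_def)
    have hc: "HH i z \<in> carrier_vec n" using EH li hol_vecD(1) by blast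
    have "(T z * Y z) $$ (l,i) = (T z *\<^sub>v col (Y z) i) $ l" using Tc[of z] Yc[of z] li by simp
    also have "\<dots> = ((z - z0) ^ nu i \<cdot>\<^sub>v HH i z) $ l" using EH li z BhE[OF li(2)] by auto
    also have "\<dots> = (z - z0) ^ nu i * HH i z $ l" using hc li by simp
    also have "\<dots> = (Hm z * Dg z) $$ (l,i)"
      unfolding Dg_def using mat_diag_mult_right[OF Hmc[of z]] li by (simp add: Hm_def)
    finally show "(T z * Y z) $$ (l,i) = (Hm z * Dg z) $$ (l,i)" .
  qed (use Tc Yc in \<open>auto simp: Hm_def Dg_def mat_diag_def\<close>)
  define X where "X z = W z * Y z" for z
  have Xh: "hol_mat Bh n r X" unfolding X_def
    by (rule hol_mat_mult[OF hol_mat_subset[OF WB BhB] hol_mat_subset[OF YB BhB]])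
  have Xc: "\<And>z. X z \<in> carrier_mat n r" using hol_matD(1)[OF Xh] .
  define P0 where "P0 z = UL z * Hm z" for z
  have P0h: "hol_mat Bh n r P0" unfolding P0_def
    by (rule hol_mat_mult[OF hol_mat_subset[OF ULB BhB] Hmh])
  have DX: "(z - z0) ^ m k * X z $$ (k,i) = (z - z0) ^ nu i * P0 z $$ (k,i)"
    if z: "z \<in> Bh" and ki: "k < n" "i < r" for z k i
  proof -
    have zB: "z \<in> B" using z BhB by auto
    have "D z * X z = UL z * (T z * Y z)" unfolding X_def
      by (rule DWY_alg[OF ULc Tc URc Wc Yc smithB[OF zB] URW[OF zB]])
    also have "\<dots> = UL z * (Hm z * Dg z)" using TY[OF z] by simp
    also have "\<dots> = P0 z * Dg z" unfolding P0_def
      by (rule assoc_mult_mat[OF ULc Hmc, of _ r, symmetric]) (simp add: Dg_def)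
    finally have eq: "D z * X z = P0 z * Dg z" .
    have "(D z * X z) $$ (k,i) = (z - z0) ^ m k * X z $$ (k,i)"
      unfolding D_def using mat_diag_mult_left[OF Xc[of z]] ki by simp
    moreover have "(P0 z * Dg z) $$ (k,i) = P0 z $$ (k,i) * (z - z0) ^ nu i"
      unfolding Dg_def using mat_diag_mult_right[of "P0 z" n r] ki hol_matD(1)[OF P0h] by simp
    ultimately show ?thesis using eq by (simp add: mult.commute)
  qed
  have X0zero: "X z0 $$ (k,i) = 0" if ki: "k < n" "i < r" and lt: "m k < nu i" for k i
  proof -
    have "X z0 $$ (k,i) = (z0 - z0) ^ (nu i - m k) * P0 z0 $$ (k,i)"
    proof (rule center_eq[of Bh z0 "\<lambda>z. X z $$ (k,i)" "\<lambda>z. (z - z0) ^ (nu i - m k) * P0 z $$ (k,i)"])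
      show "open Bh" by (simp add: Bh_def)
      show "z0 \<in> Bh" by fact
      show "continuous_on Bh (\<lambda>z. X z $$ (k,i))"
        by (rule holomorphic_on_imp_continuous_on[OF hol_matD(2)[OF Xh ki]])
      show "continuous_on Bh (\<lambda>z. (z - z0) ^ (nu i - m k) * P0 z $$ (k,i))"
        by (intro continuous_intros holomorphic_on_imp_continuous_on[OF hol_matD(2)[OF P0h ki]])
      fix z assume z: "z \<in> Bh" "z \<noteq> z0"
      have "(z - z0) ^ m k * X z $$ (k,i) = (z - z0) ^ m k * ((z - z0) ^ (nu i - m k) * P0 z $$ (k,i))"
        using DX[OF z(1) ki] lt by (simp add: power_add[symmetric])
      then show "X z $$ (k,i) = (z - z0) ^ (nu i - m k) * P0 z $$ (k,i)" using z(2) by simp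
    qed
    then show ?thesis using lt by simp
  qed
  have X0c: "X z0 \<in> carrier_mat n r" by (rule Xc)
  have Y0: "Y z0 = UR z0 * X z0"
  proof -
    have "UR z0 * X z0 = (UR z0 * W z0) * Y z0" unfolding X_def
      by (rule assoc_mult_mat[OF URc Wc Yc, symmetric])
    also have "\<dots> = Y z0" unfolding URW[OF z0B] by (rule left_mult_one_mat[OF Yc])
    finally show ?thesis by simp
  qed
  have Xind: "\<forall>c\<in>carrier_vec r. X z0 *\<^sub>v c = 0\<^sub>v n \<longrightarrow> c = 0\<^sub>v r"
  proof (intro ballI impI)
    fix c :: "complex vec" assume c: "c \<in> carrier_vec r" and X0c0: "X z0 *\<^sub>v c = 0\<^sub>v n"
    have "Y z0 *\<^sub>v c = UR z0 *\<^sub>v (X z0 *\<^sub>v c)" unfolding Y0 by (rule assoc_mult_mat_vec[OF URc X0c c])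
    also have "\<dots> = 0\<^sub>v n" unfolding X0c0 using URc[of z0] by (intro eq_vecI) (auto simp: carrier_matD)
    finally show "c = 0\<^sub>v r" using Yind c by auto
  qed
  have smith0: "UL z0 * T z0 * UR z0 = mat_diag n (\<lambda>i. 0 ^ m i)"
    using smith[of z0] e1 by simp
  have rn: "r \<le> n" and mpos: "\<And>k. k < n \<Longrightarrow> 0 < m k \<longleftrightarrow> k < r"
    using kernel_dim_smith[OF Tc ULc URc dL dR smith0 mono_m] unfolding r_def by auto
  have nu_le: "nu i \<le> m i" if "i < r" for i
    by (rule nu_le_m[OF X0c rn Xind X0zero mono_m Ymono that])
  have nu_m: "nu i = m i" if "i < r" for i
    by (rule sum_le_eq[OF nu_le Ysum that])
  define q where "q = card {k. k < n \<and> j \<le> m k}"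
  have Sq0: "{k. k < n \<and> j \<le> m k} = {..<card {k. k < n \<and> j \<le> m k}}"
  proof (rule downclosed)
    fix a b assume "a \<le> b" "b \<in> {k. k < n \<and> j \<le> m k}"
    then have "a < n" "m b \<le> m a" "j \<le> m b" using mono_m[rule_format, of a b] by auto
    then show "a \<in> {k. k < n \<and> j \<le> m k}" by simp
  qed auto
  have jq: "j \<le> m k \<longleftrightarrow> k < q" if "k < n" for k
  proof -
    have "k \<in> {k. k < n \<and> j \<le> m k} \<longleftrightarrow> k \<in> {..<q}" using Sq0 unfolding q_def by simp
    then show ?thesis using that by simp
  qed
  have qn: "q \<le> n"
  proof -
    have "{k. k < n \<and> j \<le> m k} \<subseteq> {..<n}" by auto
    from card_mono[OF finite_lessThan this] show ?thesis by (simp add: q_def)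
  qed
  have qr: "q \<le> r"
  proof (rule ccontr)
    assume "\<not> q \<le> r"
    then have rq: "r < q" by simp
    then have "r < n" using qn by simp
    then have "j \<le> m r" using jq rq by simp
    then have "0 < m r" using assms(9) by simp
    then have "r < r" using mpos[OF \<open>r < n\<close>] by simp
    then show False by simp
  qed
  have ZX: "X z0 $$ (k,b) = 0" if "k < n" "b < q" "q \<le> k" for k b
  proof (rule X0zero)
    show "k < n" "b < r" using that qr by auto
    have "m k < j" using jq[OF that(1)] that(3) by simp
    also have "j \<le> m b" using jq[of b] that qn by simp
    also have "m b = nu b" using nu_m[of b] that qr by simp
    finally show "m k < nu b" .
  qed
  define Dm where "Dm z = mat_diag r (\<lambda>i. (z - z0) ^ m i)" for z
  define Di where "Di z = Delta_inv z0 r m z" for z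
  have Dmc: "\<And>z. Dm z \<in> carrier_mat r r" by (simp add: Dm_def)
  have Dic: "\<And>z. Di z \<in> carrier_mat r r" by (simp add: Di_def Delta_inv_def)
  have DgDm: "Dg z = Dm z" for z
    unfolding Dg_def Dm_def mat_diag_def by (rule eq_matI) (auto simp: nu_m)
  have DmDi: "\<And>z. z \<noteq> z0 \<Longrightarrow> Dm z * Di z = 1\<^sub>m r"
    unfolding Dm_def Di_def Delta_inv_def using diag_inv by auto
  define P where "P z = UL z - UL z * Hm z * V z" for z
  have ULBh: "hol_mat Bh n n UL" by (rule hol_mat_subset[OF ULB BhB])
  have VBh: "hol_mat Bh r n V" by (rule hol_mat_subset[OF VB BhB])
  have Ph: "hol_mat Bh n n P" unfolding P_def
    by (rule hol_mat_minus[OF ULBh hol_mat_mult[OF hol_mat_mult[OF ULBh Hmh] VBh]])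
  have Pc: "\<And>z. P z \<in> carrier_mat n n" using hol_matD(1)[OF Ph] .
  have Dc: "\<And>z. D z \<in> carrier_mat n n" by (simp add: D_def)
  have Dinvc: "\<And>z. Dinv z \<in> carrier_mat n n" by (simp add: Dinv_def)
  have WGeq: "(W z * G z) $$ (k,l) = (z - z0) ^ (j - m k) * P z $$ (k,l)"
    if z: "z \<in> Bh" "z \<noteq> z0" and kl: "k < n" "l < n" and mk: "m k < j" for z k l
  proof -
    have zB: "z \<in> B" using z BhB by auto
    have ze2: "z \<in> ball z0 e2 - {z0}" using zB z(2) B2 by (auto simp: B_def)
    have Rdef: "resid_fun T z0 r m Y V z = Ti z - Y z * Di z * V z"
      by (simp add: resid_fun_def Ti_def Di_def)
    have Rc: "resid_fun T z0 r m Y V z \<in> carrier_mat n n"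
      unfolding Rdef by (rule minus_carrier_mat[OF mult_carrier_mat[OF mult_carrier_mat[OF Yc Dic] Vc]])
    have alg: "W z * (Ti z - Y z * Di z * V z) = Dinv z * P z"
      unfolding P_def
      by (rule WG_alg[OF ULc Tc URc Wc Tic[OF zB z(2)] Dc Dinvc Yc Hmc Dmc Dic Vc
            smithB[OF zB] URW[OF zB] TTi[OF zB z(2)] DinvD(1)[OF z(2)] TiT[OF zB z(2)]
            TY[OF z(1), unfolded DgDm] DmDi[OF z(2)]])
    have "W z * G z = W z * ((z - z0) ^ j \<cdot>\<^sub>m resid_fun T z0 r m Y V z)" using Geq[OF ze2] by simp
    also have "\<dots> = (z - z0) ^ j \<cdot>\<^sub>m (W z * resid_fun T z0 r m Y V z)"
      by (rule mult_smult_distrib[OF Wc Rc])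
    also have "W z * resid_fun T z0 r m Y V z = Dinv z * P z" unfolding Rdef by (rule alg)
    finally have "(W z * G z) $$ (k,l) = (z - z0) ^ j * (1 / (z - z0) ^ m k * P z $$ (k,l))"
      using kl mat_diag_mult_left[OF Pc[of z]] by (simp add: Dinv_def)
    also have "\<dots> = (z - z0) ^ (j - m k) * P z $$ (k,l)"
    proof -
      have "(z - z0) ^ j = (z - z0) ^ m k * (z - z0) ^ (j - m k)" using mk by (simp add: power_add[symmetric])
      then show ?thesis using z(2) by simp
    qed
    finally show ?thesis .
  qed
  define A' where "A' = W z0 * G z0"
  have A'c: "A' \<in> carrier_mat n n" unfolding A'_def by (rule mult_carrier_mat[OF Wc Gc])
  have ZA: "A' $$ (k,l) = 0" if "k < n" "q \<le> k" "l < n" for k l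
  proof -
    have mk: "m k < j" using jq[OF that(1)] that(2) by simp
    have WGh: "hol_mat Bh n n (\<lambda>z. W z * G z)"
      by (rule hol_mat_mult[OF hol_mat_subset[OF WB BhB] hol_mat_subset[OF GB BhB]])
    have "(W z0 * G z0) $$ (k,l) = (z0 - z0) ^ (j - m k) * P z0 $$ (k,l)"
    proof (rule center_eq[of Bh z0 "\<lambda>z. (W z * G z) $$ (k,l)" "\<lambda>z. (z - z0) ^ (j - m k) * P z $$ (k,l)"])
      show "open Bh" by (simp add: Bh_def)
      show "z0 \<in> Bh" by fact
      show "continuous_on Bh (\<lambda>z. (W z * G z) $$ (k,l))"
        by (rule holomorphic_on_imp_continuous_on[OF hol_matD(2)[OF WGh that(1,3)]])
      show "continuous_on Bh (\<lambda>z. (z - z0) ^ (j - m k) * P z $$ (k,l))"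
        by (intro continuous_intros holomorphic_on_imp_continuous_on[OF hol_matD(2)[OF Ph that(1,3)]])
      fix z assume "z \<in> Bh" "z \<noteq> z0"
      then show "(W z * G z) $$ (k,l) = (z - z0) ^ (j - m k) * P z $$ (k,l)"
        using WGeq that(1,3) mk by blast
    qed
    then show ?thesis using mk by (simp add: A'_def)
  qed
  obtain C where Cc: "C \<in> carrier_mat r n" and XC: "X z0 * C = A'"
    and C0: "\<forall>i l. i < r \<longrightarrow> q \<le> i \<longrightarrow> l < n \<longrightarrow> C $$ (i,l) = 0"
    using solve_block[OF X0c qr qn Xind ZX A'c ZA] by blast
  have YC: "Y z0 * C = G z0"
  proof -
    have "Y z0 * C = UR z0 * (X z0 * C)" unfolding Y0 by (rule assoc_mult_mat[OF URc X0c Cc])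
    also have "\<dots> = (UR z0 * W z0) * G z0" unfolding XC A'_def by (rule assoc_mult_mat[OF URc Wc Gc, symmetric])
    also have "\<dots> = G z0" unfolding URW[OF z0B] by (rule left_mult_one_mat[OF Gc])
    finally show ?thesis .
  qed
  define Wd where "Wd z = mat r n (\<lambda>(i,l). (z - z0) ^ (m i - j) * C $$ (i,l))" for z
  define Vt where "Vt z = V z + Wd z" for z
  have Wdh: "hol_mat \<Omega> r n Wd" unfolding Wd_def
    by (rule hol_mat_mat) (intro holomorphic_intros)
  have Vth: "hol_mat \<Omega> r n Vt" unfolding Vt_def by (rule hol_mat_add[OF Vhol Wdh])
  have Wdc: "\<And>z. Wd z \<in> carrier_mat r n" by (simp add: Wd_def)
  have DiWd: "Di z * Wd z = (1 / (z - z0) ^ j) \<cdot>\<^sub>m C" if z: "z \<noteq> z0" for z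
  proof (rule eq_matI)
    fix i l assume "i < dim_row ((1 / (z - z0) ^ j) \<cdot>\<^sub>m C)" "l < dim_col ((1 / (z - z0) ^ j) \<cdot>\<^sub>m C)"
    then have il: "i < r" "l < n" using Cc by auto
    have "(Di z * Wd z) $$ (i,l) = 1 / (z - z0) ^ m i * ((z - z0) ^ (m i - j) * C $$ (i,l))"
      unfolding Di_def Delta_inv_def using mat_diag_mult_left[OF Wdc[of z]] il by (simp add: Wd_def)
    also have "\<dots> = 1 / (z - z0) ^ j * C $$ (i,l)"
    proof (cases "q \<le> i")
      case True then show ?thesis using C0 il by simp
    next
      case False
      then have "i < q" by simp
      then have "j \<le> m i" using jq[of i] qn by simp
      then have "(z - z0) ^ m i = (z - z0) ^ j * (z - z0) ^ (m i - j)" by (simp add: power_add[symmetric])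
      then show ?thesis using z by (simp add: field_simps)
    qed
    finally show "(Di z * Wd z) $$ (i,l) = ((1 / (z - z0) ^ j) \<cdot>\<^sub>m C) $$ (i,l)" using il Cc by simp
  qed (use Cc in \<open>auto simp: Di_def Delta_inv_def Wd_def mat_diag_def\<close>)
  define F where "F a b z = (G z - Y z * C) $$ (a,b)" for a b z
  have GYh: "hol_mat B n n (\<lambda>z. G z - Y z * C)"
    by (rule hol_mat_minus[OF GB hol_mat_mult[OF YB hol_mat_const[OF Cc]]])
  have Fh: "F a b holomorphic_on B" if "a < n" "b < n" for a b
    unfolding F_def by (rule hol_matD(2)[OF GYh that])
  have F0: "F a b z0 = 0" if "a < n" "b < n" for a b
    unfolding F_def using that Gc[of z0] YC by simp
  define Gt where "Gt z = mat n n (\<lambda>(a,b). if z = z0 then deriv (F a b) z0 else (F a b z - F a b z0) / (z - z0))" for z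
  have Gth: "hol_mat B n n Gt" unfolding Gt_def
  proof (rule hol_mat_mat)
    fix a b assume ab: "a < n" "b < n"
    have "z0 \<in> interior B" using z0B by (simp add: B_def)
    from pole_lemma[OF Fh[OF ab] this]
    show "(\<lambda>z. if z = z0 then deriv (F a b) z0 else (F a b z - F a b z0) / (z - z0)) holomorphic_on B" .
  qed
  have pole: "(z - z0) ^ (j - 1) \<cdot>\<^sub>m resid_fun T z0 r m Y Vt z = Gt z" if z: "z \<in> B" "z \<noteq> z0" for z
  proof (rule eq_matI)
    fix a b assume "a < dim_row (Gt z)" "b < dim_col (Gt z)"
    then have ab: "a < n" "b < n" by (auto simp: Gt_def)
    have ze2: "z \<in> ball z0 e2 - {z0}" using z B2 by (auto simp: B_def)
    have YDi: "Y z * Di z \<in> carrier_mat n r" by (rule mult_carrier_mat[OF Yc Dic])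
    have YDiV: "Y z * Di z * V z \<in> carrier_mat n n" by (rule mult_carrier_mat[OF YDi Vc])
    have "Y z * Di z * Vt z = Y z * Di z * V z + Y z * Di z * Wd z"
      unfolding Vt_def by (rule mult_add_distrib_mat[OF YDi Vc Wdc])
    also have "Y z * Di z * Wd z = Y z * (Di z * Wd z)" by (rule assoc_mult_mat[OF Yc Dic Wdc])
    also have "\<dots> = (1 / (z - z0) ^ j) \<cdot>\<^sub>m (Y z * C)" unfolding DiWd[OF z(2)] by (rule mult_smult_distrib[OF Yc Cc])
    finally have YDVt: "Y z * Di z * Vt z = Y z * Di z * V z + (1 / (z - z0) ^ j) \<cdot>\<^sub>m (Y z * C)" .
    define R where "R = Ti z $$ (a,b) - (Y z * Di z * V z) $$ (a,b)"
    define K where "K = (Y z * C) $$ (a,b)"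
    have YCc: "Y z * C \<in> carrier_mat n n" by (rule mult_carrier_mat[OF Yc Cc])
    have "G z $$ (a,b) = ((z - z0) ^ j \<cdot>\<^sub>m resid_fun T z0 r m Y V z) $$ (a,b)" using Geq[OF ze2] by simp
    also have "\<dots> = (z - z0) ^ j * R"
      using ab carrier_matD[OF YDiV[unfolded Di_def]] by (simp add: resid_fun_def Ti_def Di_def R_def)
    finally have GR: "G z $$ (a,b) = (z - z0) ^ j * R" .
    have lhs: "((z - z0) ^ (j - 1) \<cdot>\<^sub>m resid_fun T z0 r m Y Vt z) $$ (a,b) = (z - z0) ^ (j - 1) * (R - 1 / (z - z0) ^ j * K)"
    proof -
      have "resid_fun T z0 r m Y Vt z = Ti z - Y z * Di z * Vt z" by (simp add: resid_fun_def Ti_def Di_def)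
      then have "resid_fun T z0 r m Y Vt z $$ (a,b) = Ti z $$ (a,b) - (Y z * Di z * V z) $$ (a,b) - 1 / (z - z0) ^ j * K"
        unfolding YDVt using ab carrier_matD[OF YDiV] carrier_matD[OF YCc] by (simp add: K_def)
      moreover have "dim_row (resid_fun T z0 r m Y Vt z) = n" "dim_col (resid_fun T z0 r m Y Vt z) = n"
        unfolding resid_fun_def using Yc[of z] Vc[of z] Wdc[of z] by (auto simp: Vt_def)
      ultimately show ?thesis using ab by (simp add: R_def)
    qed
    have rhs: "Gt z $$ (a,b) = (G z $$ (a,b) - K) / (z - z0)"
      using ab z(2) F0[OF ab] carrier_matD[OF YCc] by (simp add: Gt_def F_def K_def)
    have jj: "(z - z0) ^ j = (z - z0) * (z - z0) ^ (j - 1)" using assms(9)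
      by (metis One_nat_def Suc_pred not_one_le_zero power_Suc zero_less_iff_neq_zero)
    show "((z - z0) ^ (j - 1) \<cdot>\<^sub>m resid_fun T z0 r m Y Vt z) $$ (a,b) = Gt z $$ (a,b)"
      unfolding lhs rhs GR jj using z(2) by (simp add: field_simps)
  qed (use Yc[of z] Vc[of z] Wdc[of z] in \<open>auto simp: Gt_def resid_fun_def Vt_def\<close>)
  have "pole_order_le n z0 (resid_fun T z0 r m Y Vt) (j - 1)"
    unfolding pole_order_le_def
  proof (intro exI[of _ e0] exI[of _ Gt] conjI ballI)
    show "0 < e0" by fact
    show "hol_mat (ball z0 e0) n n Gt" using Gth by (simp add: B_def)
    fix z assume "z \<in> ball z0 e0 - {z0}"
    then show "(z - z0) ^ (j - 1) \<cdot>\<^sub>m resid_fun T z0 r m Y Vt z = Gt z"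
      using pole by (auto simp: B_def)
  qed
  then show ?thesis using Vth unfolding r_def by blast
qed


end
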